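(* Let $(X,\mathcal{O}(X))$ be a measurable space, $\mathcal{A}$ a unital $C^*$-algebra and $\mathcal{H}$ a Hilbert space. Let $\mathcal{I}:\mathcal{O}(X)\to CP(\mathcal{A},\mathcal{B}(\mathcal{H}))$ be a CP instrument with minimal bi-dilation $(\mathcal{K},\pi,E,V)$. Then $\mathcal{I}$ is pure if and only if the spectral instrument $\pi E$ (on $\mathcal{K}$) is irreducible, i.e. $\{\pi(a)E(A):a\in\mathcal{A},A\in\mathcal{O}(X)\}'=\mathbb{C}I_\mathcal{K}$.
   Context: A CP instrument is a map $\mathcal{I}$ from $\mathcal{O}(X)$ to the completely positive maps $\mathcal{A}\to\mathcal{B}(\mathcal{H})$ such that for all $a\in\mathcal{A}$, $h,k\in\mathcal{H}$, $A\mapsto\langle h,\mathcal{I}(A)(a)k\rangle$ is a countably additive complex measure; write $\mathcal{I}(A,a)=\mathcal{I}(A)(a)$. A CP instrument $\mathcal{J}$ is dominated by $\mathcal{I}$ if $\mathcal{I}-\mathcal{J}$ is a CP instrument; $\mathcal{I}$ is pure if every CP instrument $\mathcal{J}:\mathcal{O}(X)\to CP(\mathcal{A},\mathcal{B}(\mathcal{H}))$ dominated by $\mathcal{I}$ equals $t\mathcal{I}$ for some $t\in[0,1]$. A minimal bi-dilation is a quadruple $(\mathcal{K},\pi,E,V)$ with $\pi:\mathcal{A}\to\mathcal{B}(\mathcal{K})$ a unital $*$-homomorphism, $E:\mathcal{O}(X)\to\mathcal{B}(\mathcal{K})$ a spectral measure commuting with $\pi$, $V\in\mathcal{B}(\mathcal{H},\mathcal{K})$,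 with $\mathcal{I}(A,a)=V^*\pi(a)E(A)V$ and $\overline{\mathrm{span}}\{\pi(a)E(A)Vh\}=\mathcal{K}$; it exists and is unique up to unitary equivalence. $\pi E$ denotes the instrument $(A,a)\mapsto\pi(a)E(A)$. *)

theory Defs
  imports "HOL-Analysis.Analysis"
begin

class complex_vector = real_vector +
  fixes scaleC :: "complex \<Rightarrow> 'a \<Rightarrow> 'a" (infixr "*\<^sub>C" 75)
  assumes scaleC_add_right: "c *\<^sub>C (x + y) = c *\<^sub>C x + c *\<^sub>C y"
    and scaleC_add_left: "(b + c) *\<^sub>C x = b *\<^sub>C x + c *\<^sub>C x"
    and scaleC_scaleC: "b *\<^sub>C (c *\<^sub>C x) = (b * c) *\<^sub>C x"
    and scaleC_one: "1 *\<^sub>C x = x"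
    and scaleR_scaleC: "scaleR r x = complex_of_real r *\<^sub>C x"

class complex_inner = complex_vector +
  fixes cinner :: "'a \<Rightarrow> 'a \<Rightarrow> complex"
  assumes cinner_commute: "cinner x y = cnj (cinner y x)"
    and cinner_add_right: "cinner x (y + z) = cinner x y + cinner x z"
    and cinner_scaleC_right: "cinner x (c *\<^sub>C y) = c * cinner x y"
    and cinner_ge_zero: "0 \<le> Re (cinner x x)"
    and cinner_eq_zero_iff: "cinner x x = 0 \<longleftrightarrow> x = 0"

definition cnorm :: "'a::complex_inner \<Rightarrow> real" where
  "cnorm x = sqrt (Re (cinner x x))"

class chilbert_space = complex_inner +
  assumes chilbert_complete:
    "(\<forall>e>0. \<exists>N. \<forall>m\<ge>N. \<forall>n\<ge>N. sqrt (Re (cinner (X m - X n) (X m - X n))) < e)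
       \<Longrightarrow> \<exists>L. (\<lambda>n. sqrt (Re (cinner (X n - L) (X n - L)))) \<longlonglongrightarrow> 0"

class cstar_algebra = complex_vector + ring_1 +
  fixes star :: "'a \<Rightarrow> 'a"
    and anorm :: "'a \<Rightarrow> real"
  assumes mult_scaleC_left: "(c *\<^sub>C a) * b = c *\<^sub>C (a * b)"
    and mult_scaleC_right: "a * (c *\<^sub>C b) = c *\<^sub>C (a * b)"
    and cstar_norm_eq_zero: "anorm a = 0 \<longleftrightarrow> a = 0"
    and cstar_norm_triangle: "anorm (a + b) \<le> anorm a + anorm b"
    and cstar_norm_scaleC: "anorm (c *\<^sub>C a) = cmod c * anorm a"
    and cstar_norm_mult: "anorm (a * b) \<le> anorm a * anorm b"
    and cstar_complete:
      "(\<forall>e>0. \<exists>N. \<forall>m\<ge>N. \<forall>n\<ge>N. anorm (X m - X n) < e)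
         \<Longrightarrow> \<exists>L. (\<lambda>n. anorm (X n - L)) \<longlonglongrightarrow> 0"
    and star_star: "star (star a) = a"
    and star_add: "star (a + b) = star a + star b"
    and star_scaleC: "star (c *\<^sub>C a) = cnj c *\<^sub>C star a"
    and star_mult: "star (a * b) = star b * star a"
    and cstar_identity: "anorm (star a * a) = (anorm a)\<^sup>2"

definition bounded_clinear_op :: "('h::complex_inner \<Rightarrow> 'k::complex_inner) \<Rightarrow> bool" where
  "bounded_clinear_op T \<longleftrightarrow>
     (\<forall>x y. T (x + y) = T x + T y) \<and> (\<forall>c x. T (c *\<^sub>C x) = c *\<^sub>C T x) \<and>
     (\<exists>C. \<forall>x. cnorm (T x) \<le> C * cnorm x)"

definition is_adjoint :: "('k::complex_inner \<Rightarrow> 'h::complex_inner) \<Rightarrow> ('h \<Rightarrow> 'k) \<Rightarrow> bool" where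
  "is_adjoint S T \<longleftrightarrow> (\<forall>x y. cinner (S x) y = cinner x (T y))"

definition cspan :: "'k::complex_vector set \<Rightarrow> 'k set" where
  "cspan S = {x. \<exists>(n::nat) (c::nat \<Rightarrow> complex) (s::nat \<Rightarrow> 'k). (\<forall>i<n. s i \<in> S) \<and> x = (\<Sum>i<n. c i *\<^sub>C s i)}"

definition norm_dense :: "'k::complex_inner set \<Rightarrow> bool" where
  "norm_dense S \<longleftrightarrow> (\<forall>x. \<forall>e>0. \<exists>y\<in>S. cnorm (x - y) < e)"

definition commutant :: "('k::complex_inner \<Rightarrow> 'k) set \<Rightarrow> ('k \<Rightarrow> 'k) set" where
  "commutant S = {T. bounded_clinear_op T \<and> (\<forall>s\<in>S. T \<circ> s = s \<circ> T)}"

text \<open>Complete positivity of a linear map phi : A -> B(H), in the standard Gram form: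
  sum_{i,j} <h_i, phi(a_i^* a_j) h_j> >= 0 for all finite families.\<close>
definition cp_map :: "('a::cstar_algebra \<Rightarrow> 'h::complex_inner \<Rightarrow> 'h) \<Rightarrow> bool" where
  "cp_map \<phi> \<longleftrightarrow>
     (\<forall>a b. \<phi> (a + b) = (\<lambda>x. \<phi> a x + \<phi> b x)) \<and>
     (\<forall>c a. \<phi> (c *\<^sub>C a) = (\<lambda>x. c *\<^sub>C \<phi> a x)) \<and>
     (\<forall>a. bounded_clinear_op (\<phi> a)) \<and>
     (\<forall>(n::nat) (a::nat \<Rightarrow> 'a) (h::nat \<Rightarrow> 'h).
        Im (\<Sum>i<n. \<Sum>j<n. cinner (h i) (\<phi> (star (a i) * a j) (h j))) = 0 \<and>
        0 \<le> Re (\<Sum>i<n. \<Sum>j<n. cinner (h i) (\<phi> (star (a i) * a j) (h j))))"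

definition cp_instrument ::
  "'x measure \<Rightarrow> ('x set \<Rightarrow> 'a::cstar_algebra \<Rightarrow> 'h::complex_inner \<Rightarrow> 'h) \<Rightarrow> bool" where
  "cp_instrument M \<I> \<longleftrightarrow>
     (\<forall>A\<in>sets M. cp_map (\<I> A)) \<and>
     (\<forall>a h k (F::nat \<Rightarrow> 'x set). range F \<subseteq> sets M \<longrightarrow> disjoint_family F \<longrightarrow>
        (\<lambda>n. cinner h (\<I> (F n) a k)) sums cinner h (\<I> (\<Union>n. F n) a k))"

definition dominated_instrument ::
  "'x measure \<Rightarrow> ('x set \<Rightarrow> 'a::cstar_algebra \<Rightarrow> 'h::complex_inner \<Rightarrow> 'h)
     \<Rightarrow> ('x set \<Rightarrow> 'a \<Rightarrow> 'h \<Rightarrow> 'h) \<Rightarrow> bool" where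
  "dominated_instrument M \<J> \<I> \<longleftrightarrow>
     cp_instrument M \<J> \<and> cp_instrument M (\<lambda>A a x. \<I> A a x - \<J> A a x)"

definition pure_instrument ::
  "'x measure \<Rightarrow> ('x set \<Rightarrow> 'a::cstar_algebra \<Rightarrow> 'h::complex_inner \<Rightarrow> 'h) \<Rightarrow> bool" where
  "pure_instrument M \<I> \<longleftrightarrow>
     (\<forall>\<J>. dominated_instrument M \<J> \<I> \<longrightarrow>
        (\<exists>t::real. 0 \<le> t \<and> t \<le> 1 \<and>
           (\<forall>A\<in>sets M. \<forall>a. \<J> A a = (\<lambda>x. complex_of_real t *\<^sub>C \<I> A a x))))"

definition unital_star_hom :: "('a::cstar_algebra \<Rightarrow> 'k::complex_inner \<Rightarrow> 'k) \<Rightarrow> bool" where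
  "unital_star_hom \<pi> \<longleftrightarrow>
     (\<forall>a. bounded_clinear_op (\<pi> a)) \<and>
     (\<forall>a b. \<pi> (a + b) = (\<lambda>x. \<pi> a x + \<pi> b x)) \<and>
     (\<forall>c a. \<pi> (c *\<^sub>C a) = (\<lambda>x. c *\<^sub>C \<pi> a x)) \<and>
     (\<forall>a b. \<pi> (a * b) = \<pi> a \<circ> \<pi> b) \<and>
     \<pi> 1 = id \<and>
     (\<forall>a. is_adjoint (\<pi> (star a)) (\<pi> a))"

definition spectral_measure :: "'x measure \<Rightarrow> ('x set \<Rightarrow> 'k::complex_inner \<Rightarrow> 'k) \<Rightarrow> bool" where
  "spectral_measure M E \<longleftrightarrow>
     (\<forall>A\<in>sets M. bounded_clinear_op (E A) \<and> E A \<circ> E A = E A \<and> is_adjoint (E A) (E A)) \<and>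
     E (space M) = id \<and>
     (\<forall>x y (F::nat \<Rightarrow> 'x set). range F \<subseteq> sets M \<longrightarrow> disjoint_family F \<longrightarrow>
        (\<lambda>n. cinner x (E (F n) y)) sums cinner x (E (\<Union>n. F n) y))"

definition minimal_bidilation ::
  "'x measure \<Rightarrow> ('x set \<Rightarrow> 'a::cstar_algebra \<Rightarrow> 'h::complex_inner \<Rightarrow> 'h)
     \<Rightarrow> ('a \<Rightarrow> 'k::complex_inner \<Rightarrow> 'k) \<Rightarrow> ('x set \<Rightarrow> 'k \<Rightarrow> 'k) \<Rightarrow> ('h \<Rightarrow> 'k) \<Rightarrow> bool" where
  "minimal_bidilation M \<I> \<pi> E V \<longleftrightarrow>
     unital_star_hom \<pi> \<and> spectral_measure M E \<and>
     (\<forall>a. \<forall>A\<in>sets M. \<pi> a \<circ> E A = E A \<circ> \<pi> a) \<and>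
     bounded_clinear_op V \<and>
     (\<forall>A\<in>sets M. \<forall>a h k. cinner h (\<I> A a k) = cinner (V h) (\<pi> a (E A (V k)))) \<and>
     norm_dense (cspan {\<pi> a (E A (V h)) | a A h. A \<in> sets M})"

definition irreducible_spectral_instrument ::
  "'x measure \<Rightarrow> ('a::cstar_algebra \<Rightarrow> 'k::complex_inner \<Rightarrow> 'k) \<Rightarrow> ('x set \<Rightarrow> 'k \<Rightarrow> 'k) \<Rightarrow> bool" where
  "irreducible_spectral_instrument M \<pi> E \<longleftrightarrow>
     commutant {\<pi> a \<circ> E A | a A. A \<in> sets M} = range (\<lambda>c::complex. \<lambda>x. c *\<^sub>C x)"

end

theory Submission
  imports Defs
begin


lemma scaleC_zero_left [simp]: "(0::complex) *\<^sub>C (x::'a::complex_vector) = 0"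
  by (metis scaleR_scaleC scaleR_zero_left of_real_0)
lemma scaleC_zero_right [simp]: "c *\<^sub>C (0::'a::complex_vector) = 0"
  by (metis add_cancel_right_right scaleC_add_right)
lemma scaleC_minus_left: "(- c) *\<^sub>C (x::'a::complex_vector) = - (c *\<^sub>C x)"
  by (metis add_eq_0_iff neg_eq_iff_add_eq_0 scaleC_add_left scaleC_zero_left)
lemma scaleC_minus_right: "c *\<^sub>C (- x::'a::complex_vector) = - (c *\<^sub>C x)"
  by (metis add.right_inverse neg_eq_iff_add_eq_0 scaleC_add_right scaleC_zero_right)
lemma scaleC_diff_right: "c *\<^sub>C (x - y::'a::complex_vector) = c *\<^sub>C x - c *\<^sub>C y"
  by (simp only: diff_conv_add_uminus scaleC_add_right scaleC_minus_right)
lemma scaleC_diff_left: "(b - c) *\<^sub>C (x::'a::complex_vector) = b *\<^sub>C x - c *\<^sub>C x"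
  by (simp only: diff_conv_add_uminus scaleC_add_left scaleC_minus_left)
lemma scaleC_sum_right: "c *\<^sub>C (\<Sum>i\<in>S. f i) = (\<Sum>i\<in>S. c *\<^sub>C (f i::'a::complex_vector))"
  by (induction S rule: infinite_finite_induct) (auto simp: scaleC_add_right)
lemma scaleC_one_half: "(1/2::complex) *\<^sub>C (x + x) = (x::'a::complex_vector)"
proof -
  have "(1/2::complex) *\<^sub>C (x + x) = (1/2 + 1/2::complex) *\<^sub>C x"
    by (simp only: scaleC_add_right scaleC_add_left)
  also have "(1/2 + 1/2::complex) = 1" by simp
  finally show ?thesis by (simp add: scaleC_one)
qed
lemma double_zero_vec: "x + x = (0::'a::complex_vector) \<Longrightarrow> x = 0"
  using scaleC_one_half[of x] by simp

section \<open>Inner products\<close>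

lemma cinner_zero_right [simp]: "cinner x (0::'a::complex_inner) = 0"
  by (metis add_cancel_right_right cinner_add_right)
lemma cinner_zero_left [simp]: "cinner (0::'a::complex_inner) x = 0"
  by (metis cinner_commute cinner_zero_right complex_cnj_zero)
lemma cinner_add_left: "cinner (x + y) (z::'a::complex_inner) = cinner x z + cinner y z"
  by (metis cinner_add_right cinner_commute complex_cnj_add)
lemma cinner_scaleC_left: "cinner (c *\<^sub>C x) (y::'a::complex_inner) = cnj c * cinner x y"
  by (metis cinner_commute cinner_scaleC_right complex_cnj_mult)
lemma cinner_minus_right: "cinner x (- y::'a::complex_inner) = - cinner x y"
  by (metis add.right_inverse add_eq_0_iff cinner_add_right cinner_zero_right)
lemma cinner_minus_left: "cinner (- x::'a::complex_inner) y = - cinner x y"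
  by (metis cinner_commute cinner_minus_right complex_cnj_minus)
lemma cinner_diff_right: "cinner x (y - z::'a::complex_inner) = cinner x y - cinner x z"
  by (simp only: cinner_add_right cinner_minus_right diff_conv_add_uminus)
lemma cinner_diff_left: "cinner (x - y::'a::complex_inner) z = cinner x z - cinner y z"
  by (simp only: cinner_add_left cinner_minus_left diff_conv_add_uminus)
lemma cinner_sum_right: "cinner x (\<Sum>i\<in>S. f i) = (\<Sum>i\<in>S. cinner (x::'a::complex_inner) (f i))"
  by (induction S rule: infinite_finite_induct) (auto simp: cinner_add_right)
lemma cinner_sum_left: "cinner (\<Sum>i\<in>S. f i) x = (\<Sum>i\<in>S. cinner (f i) (x::'a::complex_inner))"
  by (induction S rule: infinite_finite_induct) (auto simp: cinner_add_left)
lemma cinner_self_Im [simp]: "Im (cinner x (x::'a::complex_inner)) = 0"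
proof -
  have "Im (cinner x x) = Im (cnj (cinner x x))" using cinner_commute[of x x] by simp
  then show ?thesis by simp
qed
lemma cinner_self_real: "cinner x (x::'a::complex_inner) = complex_of_real (Re (cinner x x))"
  by (simp add: complex_eq_iff)

lemma cinner_ext_right: "(\<And>z. cinner z x = cinner z (y::'a::complex_inner)) \<Longrightarrow> x = y"
  by (metis cinner_diff_right cinner_eq_zero_iff diff_self eq_iff_diff_eq_0)
lemma cinner_ext_left: "(\<And>z. cinner x z = cinner (y::'a::complex_inner) z) \<Longrightarrow> x = y"
  by (metis cinner_diff_left cinner_eq_zero_iff diff_self eq_iff_diff_eq_0)

lemma cnorm_ge_zero [simp]: "0 \<le> cnorm x"
  by (simp add: cnorm_def cinner_ge_zero)
lemma cnorm_sq: "(cnorm x)\<^sup>2 = Re (cinner x x)"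
  by (simp add: cnorm_def cinner_ge_zero)
lemma cinner_self_cnorm: "cinner x x = complex_of_real ((cnorm x)\<^sup>2)"
  by (metis cinner_self_real cnorm_sq)
lemma cnorm_zero [simp]: "cnorm (0::'a::complex_inner) = 0"
  by (simp add: cnorm_def)
lemma cnorm_eq_zero [simp]: "cnorm (x::'a::complex_inner) = 0 \<longleftrightarrow> x = 0"
  by (simp add: cinner_self_cnorm flip: cinner_eq_zero_iff)

lemma cinner_expand:
  "cinner (x + c *\<^sub>C y) (x + c *\<^sub>C (y::'a::complex_inner)) =
     cinner x x + c * cinner x y + cnj c * cinner y x + cnj c * c * cinner y y"
  by (simp add: cinner_add_left cinner_add_right cinner_scaleC_left cinner_scaleC_right algebra_simps)

lemma Re_cinner_expand_real:
  "Re (cinner (x + complex_of_real r *\<^sub>C y) (x + complex_of_real r *\<^sub>C (y::'a::complex_inner))) =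
     (cnorm x)\<^sup>2 + 2 * r * Re (cinner x y) + r\<^sup>2 * (cnorm y)\<^sup>2"
proof -
  have "Re (cinner y x) = Re (cinner x y)" by (metis cinner_commute complex_cnj_cnj cnj.sel(1))
  then show ?thesis unfolding cinner_expand by (simp add: cnorm_sq[symmetric] power2_eq_square)
qed

lemma quad_nonneg_imp:
  fixes a b c :: real
  assumes "\<And>r. 0 \<le> a + 2 * r * b + r\<^sup>2 * c" "c > 0"
  shows "b\<^sup>2 \<le> a * c"
proof -
  have "0 \<le> a + 2 * (- b / c) * b + (- b / c)\<^sup>2 * c" using assms(1) .
  also have "\<dots> = a - b\<^sup>2 / c" using assms(2) by (simp add: field_simps power2_eq_square)
  finally show ?thesis using assms(2) by (simp add: field_simps)
qed

lemma Re_cinner_le: "Re (cinner x (y::'a::complex_inner)) \<le> cnorm x * cnorm y"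
proof (cases "y = 0")
  case True then show ?thesis by simp
next
  case False
  then have c: "(cnorm y)\<^sup>2 > 0" by simp
  have "(Re (cinner x y))\<^sup>2 \<le> (cnorm x)\<^sup>2 * (cnorm y)\<^sup>2"
    by (rule quad_nonneg_imp[OF _ c]) (metis Re_cinner_expand_real cinner_ge_zero)
  then have "\<bar>Re (cinner x y)\<bar> \<le> cnorm x * cnorm y"
    by (metis abs_le_square_iff abs_mult abs_of_nonneg cnorm_ge_zero power_mult_distrib)
  then show ?thesis by simp
qed

lemma cnj_mult_self: "cnj z * z = complex_of_real ((cmod z)\<^sup>2)"
  by (metis complex_norm_square mult.commute)

lemma cinner_CS: "cmod (cinner x (y::'a::complex_inner)) \<le> cnorm x * cnorm y"
proof (cases "cinner x y = 0")
  case True then show ?thesis by simp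
next
  case False
  define u where "u = cnj (cinner x y) / complex_of_real (cmod (cinner x y))"
  have u: "cmod u = 1" using False by (simp add: u_def norm_divide)
  have "cinner x (u *\<^sub>C y) = complex_of_real ((cmod (cinner x y))\<^sup>2) / complex_of_real (cmod (cinner x y))"
    by (simp add: cinner_scaleC_right u_def cnj_mult_self)
  also have "\<dots> = complex_of_real (cmod (cinner x y))"
    using False by (simp add: power2_eq_square)
  finally have "cinner x (u *\<^sub>C y) = complex_of_real (cmod (cinner x y))" .
  then have "cmod (cinner x y) = Re (cinner x (u *\<^sub>C y))" by simp
  also have "\<dots> \<le> cnorm x * cnorm (u *\<^sub>C y)" by (rule Re_cinner_le)
  also have "cnorm (u *\<^sub>C y) = cnorm y"
  proof -
    have "cinner (u *\<^sub>C y) (u *\<^sub>C y) = (cnj u * u) * cinner y y"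
      by (simp add: cinner_scaleC_left cinner_scaleC_right)
    also have "cnj u * u = 1" using u by (simp add: cnj_mult_self)
    finally show ?thesis by (simp add: cnorm_def)
  qed
  finally show ?thesis .
qed

lemma cnorm_scaleC: "cnorm (c *\<^sub>C (x::'a::complex_inner)) = cmod c * cnorm x"
proof -
  have "cinner (c *\<^sub>C x) (c *\<^sub>C x) = (cnj c * c) * cinner x x"
    by (simp add: cinner_scaleC_left cinner_scaleC_right)
  then have "cinner (c *\<^sub>C x) (c *\<^sub>C x) = complex_of_real ((cmod c)\<^sup>2) * cinner x x"
    by (simp add: cnj_mult_self)
  then have "Re (cinner (c *\<^sub>C x) (c *\<^sub>C x)) = (cmod c)\<^sup>2 * Re (cinner x x)"
    by simp
  then show ?thesis by (simp add: cnorm_def real_sqrt_mult)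
qed

lemma cnorm_minus: "cnorm (- x::'a::complex_inner) = cnorm x"
proof -
  have "- x = (-1) *\<^sub>C x" by (simp add: scaleC_minus_left scaleC_one)
  then show ?thesis by (simp add: cnorm_scaleC)
qed
lemma cnorm_minus_commute: "cnorm (x - y::'a::complex_inner) = cnorm (y - x)"
  by (metis cnorm_minus minus_diff_eq)

lemma cnorm_triangle: "cnorm (x + y::'a::complex_inner) \<le> cnorm x + cnorm y"
proof -
  have r: "Re (cinner y x) = Re (cinner x y)" by (metis cinner_commute complex_cnj_cnj cnj.sel(1))
  have "cinner (x + y) (x + y) = cinner x x + cinner x y + cinner y x + cinner y y"
    by (simp add: cinner_add_left cinner_add_right)
  then have "Re (cinner (x + y) (x + y)) = Re (cinner x x) + 2 * Re (cinner x y) + Re (cinner y y)"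
    using r by simp
  then have "(cnorm (x + y))\<^sup>2 = (cnorm x)\<^sup>2 + 2 * Re (cinner x y) + (cnorm y)\<^sup>2"
    by (simp only: cnorm_sq)
  also have "\<dots> \<le> (cnorm x + cnorm y)\<^sup>2"
    using Re_cinner_le[of x y] by (simp add: power2_eq_square algebra_simps)
  finally show ?thesis by (rule power2_le_imp_le) simp
qed

lemma cnorm_triangle_diff: "cnorm (x - z::'a::complex_inner) \<le> cnorm (x - y) + cnorm (y - z)"
  using cnorm_triangle[of "x - y" "y - z"] by simp

lemma cnorm_diff_ge: "cnorm x - cnorm y \<le> cnorm (x - y::'a::complex_inner)"
  using cnorm_triangle[of "x - y" y] by simp




section \<open>Bounded operators\<close>

lemma bop_add: "bounded_clinear_op T \<Longrightarrow> T (x + y) = T x + T y"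
  by (simp add: bounded_clinear_op_def)
lemma bop_scale: "bounded_clinear_op T \<Longrightarrow> T (c *\<^sub>C x) = c *\<^sub>C T x"
  by (simp add: bounded_clinear_op_def)
lemma bop_zero: "bounded_clinear_op T \<Longrightarrow> T 0 = 0"
  by (metis bop_scale scaleC_zero_left)
lemma bop_minus: "bounded_clinear_op T \<Longrightarrow> T (- x) = - T x"
  by (metis add.right_inverse bop_add bop_zero neg_eq_iff_add_eq_0)
lemma bop_diff: "bounded_clinear_op T \<Longrightarrow> T (x - y) = T x - T y"
  by (simp only: diff_conv_add_uminus bop_add bop_minus)
lemma bop_sum: "bounded_clinear_op T \<Longrightarrow> T (\<Sum>i\<in>S. f i) = (\<Sum>i\<in>S. T (f i))"
  by (induction S rule: infinite_finite_induct) (auto simp: bop_add bop_zero)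
lemma bop_bound: "bounded_clinear_op T \<Longrightarrow> \<exists>C>0. \<forall>x. cnorm (T x) \<le> C * cnorm x"
proof -
  assume "bounded_clinear_op T"
  then obtain C where C: "\<forall>x. cnorm (T x) \<le> C * cnorm x" by (auto simp: bounded_clinear_op_def)
  have "\<forall>x. C * cnorm x \<le> (\<bar>C\<bar> + 1) * cnorm x" by (simp add: mult_right_mono)
  then have "\<forall>x. cnorm (T x) \<le> (\<bar>C\<bar> + 1) * cnorm x" using C by (meson order_trans)
  then show ?thesis by (intro exI[of _ "\<bar>C\<bar> + 1"]) auto
qed
lemma bop_intro:
  assumes "\<And>x y. T (x + y) = T x + T y" "\<And>c x. T (c *\<^sub>C x) = c *\<^sub>C T x" "\<And>x. cnorm (T x) \<le> C * cnorm x"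
  shows "bounded_clinear_op T"
  using assms unfolding bounded_clinear_op_def by blast
lemma bop_comp:
  assumes "bounded_clinear_op S" "bounded_clinear_op T"
  shows "bounded_clinear_op (\<lambda>x. S (T x))"
proof -
  obtain C where C: "C > 0" "\<forall>x. cnorm (S x) \<le> C * cnorm x" using bop_bound[OF assms(1)] by auto
  obtain D where D: "D > 0" "\<forall>x. cnorm (T x) \<le> D * cnorm x" using bop_bound[OF assms(2)] by auto
  show ?thesis
  proof (rule bop_intro[where C = "C * D"])
    fix x
    have "cnorm (S (T x)) \<le> C * cnorm (T x)" using C by auto
    also have "\<dots> \<le> C * (D * cnorm x)" using C D by (intro mult_left_mono) auto
    finally show "cnorm (S (T x)) \<le> C * D * cnorm x" by (simp add: mult.assoc)
  qed (auto simp: assms bop_add bop_scale)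
qed
lemma bop_comp': "bounded_clinear_op S \<Longrightarrow> bounded_clinear_op T \<Longrightarrow> bounded_clinear_op (S \<circ> T)"
  using bop_comp[of S T] by (simp add: comp_def)
lemma bop_id: "bounded_clinear_op (\<lambda>x. x)"
  by (rule bop_intro[where C=1]) auto
lemma bop_scalar: "bounded_clinear_op (\<lambda>x. c *\<^sub>C (x::'a::complex_inner))"
  by (rule bop_intro[where C="cmod c"]) (auto simp: scaleC_add_right scaleC_scaleC cnorm_scaleC mult.commute)
lemma bop_plus:
  assumes "bounded_clinear_op S" "bounded_clinear_op T"
  shows "bounded_clinear_op (\<lambda>x. S x + T x)"
proof -
  obtain C where C: "C > 0" "\<forall>x. cnorm (S x) \<le> C * cnorm x" using bop_bound[OF assms(1)] by auto
  obtain D where D: "D > 0" "\<forall>x. cnorm (T x) \<le> D * cnorm x" using bop_bound[OF assms(2)] by auto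
  show ?thesis
  proof (rule bop_intro[where C = "C + D"])
    fix x
    have "cnorm (S x + T x) \<le> cnorm (S x) + cnorm (T x)" by (rule cnorm_triangle)
    also have "\<dots> \<le> (C + D) * cnorm x" using C D by (simp add: algebra_simps add_mono)
    finally show "cnorm (S x + T x) \<le> (C + D) * cnorm x" .
  qed (auto simp: assms bop_add bop_scale scaleC_add_right)
qed
lemma bop_smult:
  assumes "bounded_clinear_op T"
  shows "bounded_clinear_op (\<lambda>x. c *\<^sub>C T x)"
  using bop_comp[OF bop_scalar[of c] assms] .
lemma bop_minus_op:
  assumes "bounded_clinear_op S" "bounded_clinear_op T"
  shows "bounded_clinear_op (\<lambda>x. S x - T x)"
proof -
  have "bounded_clinear_op (\<lambda>x. S x + (-1) *\<^sub>C T x)"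
    by (intro bop_plus bop_smult assms)
  moreover have "(\<lambda>x. S x + (-1) *\<^sub>C T x) = (\<lambda>x. S x - T x)"
    by (simp add: scaleC_minus_left scaleC_one)
  ultimately show ?thesis by simp
qed

section \<open>Dense subspaces\<close>

definition dsub :: "'a::complex_inner set \<Rightarrow> bool" where
  "dsub D \<longleftrightarrow> 0 \<in> D \<and> (\<forall>x\<in>D. \<forall>y\<in>D. x + y \<in> D) \<and> (\<forall>c. \<forall>x\<in>D. c *\<^sub>C x \<in> D) \<and>
     (\<forall>x. \<forall>e>0. \<exists>y\<in>D. cnorm (x - y) < e)"

lemma dsub_UNIV: "dsub (UNIV :: 'a::complex_inner set)"
  unfolding dsub_def by (metis UNIV_I cnorm_zero diff_self)

lemma dsub_diff: "dsub D \<Longrightarrow> x \<in> D \<Longrightarrow> y \<in> D \<Longrightarrow> x - y \<in> D"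
proof -
  assume D: "dsub D" "x \<in> D" "y \<in> D"
  then have "x + (-1) *\<^sub>C y \<in> D" unfolding dsub_def by blast
  then show ?thesis by (simp add: scaleC_minus_left scaleC_one)
qed

lemma dsub_seq:
  assumes "dsub D"
  shows "\<exists>u. (\<forall>n. u n \<in> D) \<and> (\<lambda>n. cnorm (u n - x)) \<longlonglongrightarrow> 0"
proof -
  have "\<forall>n. \<exists>y\<in>D. cnorm (x - y) < inverse (real (Suc n))"
    using assms unfolding dsub_def by auto
  then obtain u where u: "\<forall>n. u n \<in> D \<and> cnorm (x - u n) < inverse (real (Suc n))"
    by metis
  have "(\<lambda>n. cnorm (u n - x)) \<longlonglongrightarrow> 0"
  proof (rule Lim_null_comparison[OF _ LIMSEQ_inverse_real_of_nat])
    show "\<forall>\<^sub>F n in sequentially. norm (cnorm (u n - x)) \<le> inverse (real (Suc n))"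
      using u by (auto simp: cnorm_minus_commute less_imp_le)
  qed
  then show ?thesis using u by blast
qed

lemma cnorm_tendsto:
  assumes "(\<lambda>n. cnorm (u n - x)) \<longlonglongrightarrow> 0"
  shows "(\<lambda>n. cnorm (u n)) \<longlonglongrightarrow> cnorm x"
proof -
  have "(\<lambda>n. cnorm (u n) - cnorm x) \<longlonglongrightarrow> 0"
  proof (rule Lim_null_comparison[OF _ assms])
    show "\<forall>\<^sub>F n in sequentially. norm (cnorm (u n) - cnorm x) \<le> cnorm (u n - x)"
      using cnorm_diff_ge[of "u n" x for n] cnorm_diff_ge[of x "u n" for n]
      by (auto simp: cnorm_minus_commute abs_le_iff)
  qed
  then show ?thesis by (simp add: LIM_zero_iff)
qed

section \<open>Riesz representation\<close>

lemma parallelogram: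
  "(cnorm (a + b))\<^sup>2 + (cnorm (a - b))\<^sup>2 = 2 * (cnorm a)\<^sup>2 + 2 * (cnorm (b::'a::complex_inner))\<^sup>2"
proof -
  have "cinner (a + b) (a + b) + cinner (a - b) (a - b) = 2 * cinner a a + 2 * cinner b b"
    by (simp add: cinner_add_left cinner_add_right cinner_diff_left cinner_diff_right)
  then have "Re (cinner (a + b) (a + b) + cinner (a - b) (a - b)) = Re (2 * cinner a a + 2 * cinner b b)"
    by simp
  then have "Re (cinner (a + b) (a + b)) + Re (cinner (a - b) (a - b)) = 2 * Re (cinner a a) + 2 * Re (cinner b b)"
    by simp
  then show ?thesis by (simp only: cnorm_sq)
qed




lemma scaleC_two: "(2::complex) *\<^sub>C (x::'a::complex_vector) = x + x"
proof -
  have "(1+1::complex) *\<^sub>C x = x + x" by (simp only: scaleC_add_left scaleC_one)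
  then show ?thesis by simp
qed

lemma quad_zero:
  fixes b c :: real
  assumes "\<And>r. 0 \<le> 2 * r * b + r\<^sup>2 * c" shows "b = 0"
proof (cases "c > 0")
  case True
  have "b\<^sup>2 \<le> 0 * c" by (rule quad_nonneg_imp) (use assms True in auto)
  then show ?thesis by simp
next
  case False
  have "0 \<le> 2 * (- b) * b + (- b)\<^sup>2 * c" by (rule assms)
  moreover have "(- b)\<^sup>2 * c \<le> 0" using False by (simp add: mult_nonneg_nonpos)
  ultimately have "b * b \<le> 0" by (simp add: algebra_simps)
  then have "b * b = 0" using zero_le_square[of b] by linarith
  then show ?thesis by simp
qed

lemma min_orth:
  fixes w u :: "'a::complex_inner"
  assumes "\<And>s::real. cnorm w \<le> cnorm (w - complex_of_real s *\<^sub>C u)"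
  shows "Re (cinner w u) = 0"
proof -
  have "- Re (cinner w u) = 0"
  proof (rule quad_zero)
    fix r :: real
    have e: "w - complex_of_real r *\<^sub>C u = w + complex_of_real (- r) *\<^sub>C u"
      by (simp add: scaleC_minus_left)
    have "(cnorm w)\<^sup>2 \<le> (cnorm (w - complex_of_real r *\<^sub>C u))\<^sup>2"
      using assms[of r] by (simp add: power_mono)
    also have "\<dots> = (cnorm w)\<^sup>2 + 2 * (- r) * Re (cinner w u) + (- r)\<^sup>2 * (cnorm u)\<^sup>2"
      unfolding e cnorm_sq[of "w + _"] Re_cinner_expand_real ..
    finally show "0 \<le> 2 * r * - Re (cinner w u) + r\<^sup>2 * (cnorm u)\<^sup>2" by simp
  qed
  then show ?thesis by simp
qed

lemma riesz:
  fixes f :: "'a::chilbert_space \<Rightarrow> complex"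
  assumes add: "\<And>x y. f (x + y) = f x + f y" and sc: "\<And>c x. f (c *\<^sub>C x) = c * f x"
    and bd: "\<And>x. cmod (f x) \<le> C * cnorm x"
  shows "\<exists>z. \<forall>x. f x = cinner z x"
proof (cases "\<forall>x. f x = 0")
  case True then show ?thesis by (intro exI[of _ 0]) simp
next
  case False
  then obtain x0 where fx0: "f x0 \<noteq> 0" by auto
  have f0: "f 0 = 0" using sc[of 0 0] by simp
  have fdiff: "f (x - y) = f x - f y" for x y
  proof -
    have "f (x + (-1) *\<^sub>C y) = f x - f y" by (simp add: add sc)
    then show ?thesis by (simp add: scaleC_minus_left scaleC_one)
  qed
  define S where "S = (\<lambda>n. cnorm (x0 - n)) ` {n. f n = 0}"
  define \<delta> where "\<delta> = Inf S"
  have Sne: "S \<noteq> {}" using f0 by (auto simp: S_def)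
  have bdd: "bdd_below S" unfolding S_def by (rule bdd_belowI[of _ 0]) auto
  have \<delta>le: "\<delta> \<le> cnorm (x0 - n)" if "f n = 0" for n
    unfolding \<delta>_def by (rule cInf_lower[OF _ bdd]) (use that in \<open>auto simp: S_def\<close>)
  have \<delta>0: "0 \<le> \<delta>" unfolding \<delta>_def by (rule cInf_greatest[OF Sne]) (auto simp: S_def)
  define e :: "nat \<Rightarrow> real" where "e k = inverse (real (Suc k))" for k
  have e_pos: "0 < e k" for k by (simp add: e_def)
  have e_le1: "e k \<le> 1" for k by (simp add: e_def inverse_le_1_iff)
  have e_mono: "m \<ge> N \<Longrightarrow> e m \<le> e N" for m N by (simp add: e_def le_imp_inverse_le)
  have "\<exists>n. f n = 0 \<and> cnorm (x0 - n) < \<delta> + e k" for k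
  proof -
    have "Inf S < \<delta> + e k" using e_pos[of k] by (simp add: \<delta>_def)
    from cInf_lessD[OF Sne this] show ?thesis by (auto simp: S_def)
  qed
  then obtain nk where nk0: "\<And>k. f (nk k) = 0" and nk1: "\<And>k. cnorm (x0 - nk k) < \<delta> + e k"
    by metis
  have key: "(cnorm (nk m - nk n))\<^sup>2 \<le> (4 * \<delta> + 2) * (e m + e n)" for m n
  proof -
    define a where "a = x0 - nk m"
    define b where "b = x0 - nk n"
    define mid where "mid = (1/2::complex) *\<^sub>C (nk m + nk n)"
    have fmid: "f mid = 0" by (simp add: mid_def sc add nk0)
    have ab: "a + b = (2::complex) *\<^sub>C (x0 - mid)"
    proof -
      have "(2::complex) *\<^sub>C (x0 - mid) = (1 + 1::complex) *\<^sub>C x0 - (2 * (1/2)::complex) *\<^sub>C (nk m + nk n)"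
        by (simp add: mid_def scaleC_diff_right scaleC_scaleC)
      also have "\<dots> = a + b" by (simp add: a_def b_def scaleC_two scaleC_one)
      finally show ?thesis by simp
    qed
    have "cnorm (a + b) = 2 * cnorm (x0 - mid)" by (simp add: ab cnorm_scaleC)
    then have "2 * \<delta> \<le> cnorm (a + b)" using \<delta>le[OF fmid] by simp
    then have "(2 * \<delta>)\<^sup>2 \<le> (cnorm (a + b))\<^sup>2"
      using \<delta>0 by (intro power_mono) auto
    then have s1: "4 * \<delta>\<^sup>2 \<le> (cnorm (a + b))\<^sup>2" by (simp add: power_mult_distrib)
    have "a - b = nk n - nk m" by (simp add: a_def b_def)
    then have "(cnorm (nk m - nk n))\<^sup>2 = 2 * (cnorm a)\<^sup>2 + 2 * (cnorm b)\<^sup>2 - (cnorm (a + b))\<^sup>2"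
      using parallelogram[of a b] by (simp add: cnorm_minus_commute)
    also have "\<dots> \<le> 2 * (\<delta> + e m)\<^sup>2 + 2 * (\<delta> + e n)\<^sup>2 - 4 * \<delta>\<^sup>2"
    proof -
      have "(cnorm a)\<^sup>2 \<le> (\<delta> + e m)\<^sup>2" using nk1[of m] by (simp add: a_def power_mono less_imp_le)
      moreover have "(cnorm b)\<^sup>2 \<le> (\<delta> + e n)\<^sup>2" using nk1[of n] by (simp add: b_def power_mono less_imp_le)
      ultimately show ?thesis using s1 by linarith
    qed
    also have "\<dots> = 4 * \<delta> * (e m + e n) + 2 * (e m * e m) + 2 * (e n * e n)"
      by (simp add: power2_eq_square algebra_simps)
    also have "\<dots> \<le> 4 * \<delta> * (e m + e n) + 2 * e m + 2 * e n"
      using e_le1[of m] e_le1[of n] e_pos[of m] e_pos[of n]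
      by (intro add_mono) (auto intro: mult_left_le_one_le less_imp_le)
    also have "\<dots> = (4 * \<delta> + 2) * (e m + e n)" by (simp add: algebra_simps)
    finally show ?thesis .
  qed
  have cauchy: "\<forall>\<epsilon>>0. \<exists>N. \<forall>m\<ge>N. \<forall>n\<ge>N. sqrt (Re (cinner (nk m - nk n) (nk m - nk n))) < \<epsilon>"
  proof (intro allI impI)
    fix \<epsilon> :: real assume "\<epsilon> > 0"
    then have "\<epsilon>\<^sup>2 / (2 * (4 * \<delta> + 2)) > 0" using \<delta>0 by simp
    then obtain N where N: "inverse (real (Suc N)) < \<epsilon>\<^sup>2 / (2 * (4 * \<delta> + 2))"
      using reals_Archimedean by blast
    show "\<exists>N. \<forall>m\<ge>N. \<forall>n\<ge>N. sqrt (Re (cinner (nk m - nk n) (nk m - nk n))) < \<epsilon>"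
    proof (intro exI allI impI)
      fix m n assume mn: "m \<ge> N" "n \<ge> N"
      have "(cnorm (nk m - nk n))\<^sup>2 \<le> (4 * \<delta> + 2) * (e m + e n)" by (rule key)
      also have "\<dots> \<le> (4 * \<delta> + 2) * (2 * e N)"
        using e_mono[OF mn(1)] e_mono[OF mn(2)] \<delta>0 by (intro mult_left_mono) auto
      also have "\<dots> < (4 * \<delta> + 2) * (2 * (\<epsilon>\<^sup>2 / (2 * (4 * \<delta> + 2))))"
        using N \<delta>0 by (intro mult_strict_left_mono) (auto simp: e_def)
      also have "\<dots> = \<epsilon>\<^sup>2" using \<delta>0 by (simp add: field_simps)
      finally have "cnorm (nk m - nk n) < \<epsilon>" using \<open>\<epsilon> > 0\<close> by (simp add: power_less_imp_less_base)
      then show "sqrt (Re (cinner (nk m - nk n) (nk m - nk n))) < \<epsilon>" by (simp add: cnorm_def)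
    qed
  qed
  obtain L where L: "(\<lambda>n. cnorm (nk n - L)) \<longlonglongrightarrow> 0"
    using chilbert_complete[OF cauchy] by (auto simp: cnorm_def)
  have fL: "f L = 0"
  proof -
    have "cmod (f L) \<le> 0"
    proof (rule LIMSEQ_le_const)
      show "(\<lambda>k. C * cnorm (nk k - L)) \<longlonglongrightarrow> 0" using tendsto_mult_right_zero[OF L] by simp
      have "cmod (f L) \<le> C * cnorm (nk k - L)" for k
        using bd[of "L - nk k"] by (simp add: fdiff nk0 cnorm_minus_commute)
      then show "\<exists>N. \<forall>n\<ge>N. cmod (f L) \<le> C * cnorm (nk n - L)" by auto
    qed
    then show ?thesis by simp
  qed
  define w where "w = x0 - L"
  have "cnorm w \<le> \<delta> + 0 + 0"
  proof (rule LIMSEQ_le_const)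
    show "(\<lambda>k. \<delta> + e k + cnorm (nk k - L)) \<longlonglongrightarrow> \<delta> + 0 + 0"
      by (intro tendsto_add tendsto_const L) (unfold e_def, rule LIMSEQ_inverse_real_of_nat)
    have "cnorm w \<le> \<delta> + e k + cnorm (nk k - L)" for k
      using cnorm_triangle_diff[of x0 L "nk k"] nk1[of k] by (simp add: w_def)
    then show "\<exists>N. \<forall>n\<ge>N. cnorm w \<le> \<delta> + e n + cnorm (nk n - L)" by auto
  qed
  then have wle: "cnorm w \<le> \<delta>" by simp
  have orth: "cinner w u = 0" if fu: "f u = 0" for u
  proof -
    have mn: "cnorm w \<le> cnorm (w - v)" if "f v = 0" for v
    proof -
      have "f (L + v) = 0" by (simp add: add fL that)
      then have "\<delta> \<le> cnorm (x0 - (L + v))" by (rule \<delta>le)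
      then show ?thesis using wle by (simp add: w_def diff_diff_eq)
    qed
    have "Re (cinner w u) = 0"
      by (rule min_orth) (rule mn, simp add: sc fu)
    moreover have "Re (cinner w (\<i> *\<^sub>C u)) = 0"
      by (rule min_orth) (rule mn, simp add: sc fu)
    ultimately show ?thesis by (simp add: cinner_scaleC_right complex_eq_iff)
  qed
  have fw: "f w = f x0" by (simp add: w_def fdiff fL)
  then have w0: "w \<noteq> 0" using fx0 f0 by auto
  then have ww: "cinner w w \<noteq> 0" by (simp add: cinner_eq_zero_iff)
  show ?thesis
  proof (intro exI allI)
    fix x
    have "f (x - (f x / f w) *\<^sub>C w) = 0" using fw fx0 by (simp add: fdiff sc)
    then have "cinner w (x - (f x / f w) *\<^sub>C w) = 0" by (rule orth)
    then have wx: "cinner w x = (f x / f w) * cinner w w" by (simp add: cinner_diff_right cinner_scaleC_right)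
    show "f x = cinner (cnj (f w / cinner w w) *\<^sub>C w) x"
      using ww fw fx0 by (simp add: cinner_scaleC_left wx)
  qed
qed




definition conv :: "'a::complex_inner set \<Rightarrow> (nat \<Rightarrow> 'a) \<Rightarrow> 'a \<Rightarrow> bool" where
  "conv D u x \<longleftrightarrow> (\<forall>n. u n \<in> D) \<and> (\<lambda>n. cnorm (u n - x)) \<longlonglongrightarrow> 0"

lemma conv_const: "x \<in> D \<Longrightarrow> conv D (\<lambda>n. x) x"
  by (simp add: conv_def)

lemma conv_add:
  assumes "dsub D" "conv D u x" "conv D u' x'"
  shows "conv D (\<lambda>n. u n + u' n) (x + x')"
proof -
  have "(\<lambda>n. cnorm (u n + u' n - (x + x'))) \<longlonglongrightarrow> 0"
  proof (rule Lim_null_comparison)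
    show "(\<lambda>n. cnorm (u n - x) + cnorm (u' n - x')) \<longlonglongrightarrow> 0"
      using assms by (auto simp: conv_def intro: tendsto_add_zero)
    have "cnorm (u n + u' n - (x + x')) \<le> cnorm (u n - x) + cnorm (u' n - x')" for n
      using cnorm_triangle[of "u n - x" "u' n - x'"] by (simp add: algebra_simps)
    then show "\<forall>\<^sub>F n in sequentially. norm (cnorm (u n + u' n - (x + x'))) \<le> cnorm (u n - x) + cnorm (u' n - x')"
      by simp
  qed
  then show ?thesis using assms unfolding conv_def dsub_def by auto
qed

lemma conv_scale:
  assumes "dsub D" "conv D u x"
  shows "conv D (\<lambda>n. c *\<^sub>C u n) (c *\<^sub>C x)"
proof -
  have "(\<lambda>n. cmod c * cnorm (u n - x)) \<longlonglongrightarrow> 0"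
    using assms tendsto_mult_right_zero by (auto simp: conv_def)
  then have "(\<lambda>n. cnorm (c *\<^sub>C u n - c *\<^sub>C x)) \<longlonglongrightarrow> 0"
    by (simp add: cnorm_scaleC flip: scaleC_diff_right)
  then show ?thesis using assms unfolding conv_def dsub_def by auto
qed

lemma conv_exists: "dsub D \<Longrightarrow> \<exists>u. conv D u x"
  using dsub_seq unfolding conv_def by blast

lemma conv_norm: "conv D u x \<Longrightarrow> (\<lambda>n. cnorm (u n)) \<longlonglongrightarrow> cnorm x"
  by (simp add: conv_def cnorm_tendsto)

lemma conv_dist: "conv D u x \<Longrightarrow> conv D u' x \<Longrightarrow> cnorm (u n - u' n) \<le> cnorm (u n - x) + cnorm (u' n - x)"
  using cnorm_triangle_diff[of "u n" "u' n" x] by (simp add: cnorm_minus_commute)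

locale bform =
  fixes D1 :: "'a::chilbert_space set" and D2 :: "'b::chilbert_space set"
    and \<beta> :: "'a \<Rightarrow> 'b \<Rightarrow> complex" and C :: real
  assumes D1: "dsub D1" and D2: "dsub D2"
    and ladd: "\<And>x x' y. x\<in>D1 \<Longrightarrow> x'\<in>D1 \<Longrightarrow> y\<in>D2 \<Longrightarrow> \<beta> (x + x') y = \<beta> x y + \<beta> x' y"
    and lsc: "\<And>c x y. x\<in>D1 \<Longrightarrow> y\<in>D2 \<Longrightarrow> \<beta> (c *\<^sub>C x) y = cnj c * \<beta> x y"
    and radd: "\<And>x y y'. x\<in>D1 \<Longrightarrow> y\<in>D2 \<Longrightarrow> y'\<in>D2 \<Longrightarrow> \<beta> x (y + y') = \<beta> x y + \<beta> x y'"
    and rsc: "\<And>c x y. x\<in>D1 \<Longrightarrow> y\<in>D2 \<Longrightarrow> \<beta> x (c *\<^sub>C y) = c * \<beta> x y"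
    and bd: "\<And>x y. x\<in>D1 \<Longrightarrow> y\<in>D2 \<Longrightarrow> cmod (\<beta> x y) \<le> C * cnorm x * cnorm y"
    and C: "C \<ge> 0"
begin

lemma ldiff: "x\<in>D1 \<Longrightarrow> x'\<in>D1 \<Longrightarrow> y\<in>D2 \<Longrightarrow> \<beta> (x - x') y = \<beta> x y - \<beta> x' y"
proof -
  assume a: "x\<in>D1" "x'\<in>D1" "y\<in>D2"
  then have m: "(-1) *\<^sub>C x' \<in> D1" using D1 unfolding dsub_def by blast
  have e: "x - x' = x + (-1) *\<^sub>C x'" by (simp add: scaleC_minus_left scaleC_one)
  show ?thesis unfolding e using a m by (subst ladd) (auto simp: lsc)
qed

lemma rdiff: "x\<in>D1 \<Longrightarrow> y\<in>D2 \<Longrightarrow> y'\<in>D2 \<Longrightarrow> \<beta> x (y - y') = \<beta> x y - \<beta> x y'"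
proof -
  assume a: "x\<in>D1" "y\<in>D2" "y'\<in>D2"
  then have m: "(-1) *\<^sub>C y' \<in> D2" using D2 unfolding dsub_def by blast
  have e: "y - y' = y + (-1) *\<^sub>C y'" by (simp add: scaleC_minus_left scaleC_one)
  show ?thesis unfolding e using a m by (subst radd) (auto simp: rsc)
qed

lemma diffbound:
  assumes "u\<in>D1" "u'\<in>D1" "v\<in>D2" "v'\<in>D2"
  shows "cmod (\<beta> u v - \<beta> u' v') \<le> C * (cnorm (u - u') * cnorm v + cnorm u' * cnorm (v - v'))"
proof -
  have "\<beta> u v - \<beta> u' v' = \<beta> (u - u') v + \<beta> u' (v - v')"
    using assms by (simp add: ldiff rdiff)
  then have "cmod (\<beta> u v - \<beta> u' v') \<le> cmod (\<beta> (u - u') v) + cmod (\<beta> u' (v - v'))"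
    by (simp add: norm_triangle_ineq)
  also have "\<dots> \<le> C * cnorm (u - u') * cnorm v + C * cnorm u' * cnorm (v - v')"
    using assms D1 D2 by (intro add_mono bd) (auto simp: dsub_diff)
  finally show ?thesis by (simp add: algebra_simps)
qed

lemma conv_diff_zero:
  assumes u: "conv D1 u x" and u': "conv D1 u' x" and v: "conv D2 v y" and v': "conv D2 v' y"
  shows "(\<lambda>n. \<beta> (u n) (v n) - \<beta> (u' n) (v' n)) \<longlonglongrightarrow> 0"
proof (rule Lim_null_comparison)
  let ?g = "\<lambda>n. C * ((cnorm (u n - x) + cnorm (u' n - x)) * cnorm (v n) + cnorm (u' n) * (cnorm (v n - y) + cnorm (v' n - y)))"
  have "?g \<longlonglongrightarrow> C * ((0 + 0) * cnorm y + cnorm x * (0 + 0))"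
    using u u' v v' unfolding conv_def
    by (intro tendsto_intros conv_norm[OF v] conv_norm[OF u']) auto
  then show "?g \<longlonglongrightarrow> 0" by simp
  show "\<forall>\<^sub>F n in sequentially. norm (\<beta> (u n) (v n) - \<beta> (u' n) (v' n)) \<le> ?g n"
  proof (intro always_eventually allI)
    fix n
    have mem: "u n \<in> D1" "u' n \<in> D1" "v n \<in> D2" "v' n \<in> D2" using u u' v v' by (auto simp: conv_def)
    have "norm (\<beta> (u n) (v n) - \<beta> (u' n) (v' n)) \<le> C * (cnorm (u n - u' n) * cnorm (v n) + cnorm (u' n) * cnorm (v n - v' n))"
      using diffbound[OF mem] by simp
    also have "\<dots> \<le> ?g n"
      using C conv_dist[OF u u', of n] conv_dist[OF v v', of n]
      by (intro mult_left_mono add_mono mult_right_mono mult_left_mono) auto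
    finally show "norm (\<beta> (u n) (v n) - \<beta> (u' n) (v' n)) \<le> ?g n" .
  qed
qed

lemma conv_cauchy:
  assumes u: "conv D1 u x" and v: "conv D2 v y"
  shows "Cauchy (\<lambda>n. \<beta> (u n) (v n))"
proof (rule CauchyI)
  fix e :: real assume e: "0 < e"
  define K0 where "K0 = 2 * C * (cnorm x + cnorm y + 2) + 1"
  have K0: "K0 > 0" using C unfolding K0_def by (simp add: add_nonneg_pos)
  define \<delta> where "\<delta> = min 1 (e / K0)"
  have \<delta>: "\<delta> > 0" "\<delta> \<le> 1" "\<delta> * K0 \<le> e" using e K0 by (auto simp: \<delta>_def min_def field_simps)
  have "\<forall>\<^sub>F n in sequentially. cnorm (u n - x) < \<delta>"
    using u \<delta> unfolding conv_def by (auto dest: order_tendstoD(2))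
  moreover have "\<forall>\<^sub>F n in sequentially. cnorm (v n - y) < \<delta>"
    using v \<delta> unfolding conv_def by (auto dest: order_tendstoD(2))
  ultimately have "\<forall>\<^sub>F n in sequentially. cnorm (u n - x) < \<delta> \<and> cnorm (v n - y) < \<delta>"
    by (rule eventually_conj)
  then obtain N where N: "\<And>n. n \<ge> N \<Longrightarrow> cnorm (u n - x) < \<delta> \<and> cnorm (v n - y) < \<delta>"
    by (auto simp: eventually_sequentially)
  show "\<exists>M. \<forall>m\<ge>M. \<forall>n\<ge>M. norm (\<beta> (u m) (v m) - \<beta> (u n) (v n)) < e"
  proof (intro exI allI impI)
    fix m n assume mn: "m \<ge> N" "n \<ge> N"
    have mem: "u m \<in> D1" "u n \<in> D1" "v m \<in> D2" "v n \<in> D2" using u v by (auto simp: conv_def)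
    have a1: "cnorm (u m - u n) \<le> 2 * \<delta>" using conv_dist[OF u u, of m] N[OF mn(1)] N[OF mn(2)]
      by (smt (verit) conv_dist[OF u u] cnorm_triangle_diff cnorm_minus_commute)
    have a2: "cnorm (v m - v n) \<le> 2 * \<delta>"
      using cnorm_triangle_diff[of "v m" "v n" y] N[OF mn(1)] N[OF mn(2)] cnorm_minus_commute[of y "v n"]
      by linarith
    have a3: "cnorm (v m) \<le> cnorm y + 1"
      using cnorm_triangle[of "v m - y" y] N[OF mn(1)] \<delta> by simp
    have a4: "cnorm (u n) \<le> cnorm x + 1"
      using cnorm_triangle[of "u n - x" x] N[OF mn(2)] \<delta> by simp
    have "norm (\<beta> (u m) (v m) - \<beta> (u n) (v n)) \<le> C * (cnorm (u m - u n) * cnorm (v m) + cnorm (u n) * cnorm (v m - v n))"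
      using diffbound[OF mem] by simp
    also have "\<dots> \<le> C * ((2 * \<delta>) * (cnorm y + 1) + (cnorm x + 1) * (2 * \<delta>))"
      using a1 a2 a3 a4 C \<delta> by (intro mult_left_mono add_mono mult_mono) auto
    also have "\<dots> = \<delta> * (K0 - 1)" by (simp add: K0_def algebra_simps)
    also have "\<dots> < \<delta> * K0" using \<delta> by simp
    also have "\<dots> \<le> e" by (rule \<delta>)
    finally show "norm (\<beta> (u m) (v m) - \<beta> (u n) (v n)) < e" .
  qed
qed

definition seq1 :: "'a \<Rightarrow> nat \<Rightarrow> 'a" where "seq1 x = (SOME u. conv D1 u x)"
definition seq2 :: "'b \<Rightarrow> nat \<Rightarrow> 'b" where "seq2 y = (SOME v. conv D2 v y)"
definition ext :: "'a \<Rightarrow> 'b \<Rightarrow> complex" where "ext x y = lim (\<lambda>n. \<beta> (seq1 x n) (seq2 y n))"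

lemma seq1: "conv D1 (seq1 x) x"
  unfolding seq1_def using conv_exists[OF D1] by (rule someI_ex)
lemma seq2: "conv D2 (seq2 y) y"
  unfolding seq2_def using conv_exists[OF D2] by (rule someI_ex)

lemma ext_lim:
  assumes u: "conv D1 u x" and v: "conv D2 v y"
  shows "(\<lambda>n. \<beta> (u n) (v n)) \<longlonglongrightarrow> ext x y"
proof -
  have "convergent (\<lambda>n. \<beta> (seq1 x n) (seq2 y n))"
    using conv_cauchy[OF seq1 seq2] by (simp add: Cauchy_convergent_iff)
  then have c: "(\<lambda>n. \<beta> (seq1 x n) (seq2 y n)) \<longlonglongrightarrow> ext x y"
    by (simp add: ext_def convergent_LIMSEQ_iff)
  have "(\<lambda>n. (\<beta> (u n) (v n) - \<beta> (seq1 x n) (seq2 y n)) + \<beta> (seq1 x n) (seq2 y n)) \<longlonglongrightarrow> 0 + ext x y"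
    by (intro tendsto_add c conv_diff_zero[OF u seq1 v seq2])
  then show ?thesis by simp
qed

lemma ext_eq: "x \<in> D1 \<Longrightarrow> y \<in> D2 \<Longrightarrow> ext x y = \<beta> x y"
  using ext_lim[OF conv_const conv_const, of x y] by (simp add: LIMSEQ_const_iff)

lemma ext_ladd: "ext (x + x') y = ext x y + ext x' y"
proof -
  have "(\<lambda>n. \<beta> (seq1 x n + seq1 x' n) (seq2 y n)) \<longlonglongrightarrow> ext (x + x') y"
    by (intro ext_lim conv_add D1 seq1 seq2)
  moreover have "(\<lambda>n. \<beta> (seq1 x n + seq1 x' n) (seq2 y n)) \<longlonglongrightarrow> ext x y + ext x' y"
  proof -
    have "(\<lambda>n. \<beta> (seq1 x n) (seq2 y n) + \<beta> (seq1 x' n) (seq2 y n)) \<longlonglongrightarrow> ext x y + ext x' y"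
      by (intro tendsto_add ext_lim seq1 seq2)
    moreover have "\<beta> (seq1 x n + seq1 x' n) (seq2 y n) = \<beta> (seq1 x n) (seq2 y n) + \<beta> (seq1 x' n) (seq2 y n)" for n
      using seq1[of x] seq1[of x'] seq2[of y] by (simp add: conv_def ladd)
    ultimately show ?thesis by simp
  qed
  ultimately show ?thesis by (rule LIMSEQ_unique)
qed

lemma ext_radd: "ext x (y + y') = ext x y + ext x y'"
proof -
  have "(\<lambda>n. \<beta> (seq1 x n) (seq2 y n + seq2 y' n)) \<longlonglongrightarrow> ext x (y + y')"
    by (intro ext_lim conv_add D2 seq1 seq2)
  moreover have "(\<lambda>n. \<beta> (seq1 x n) (seq2 y n + seq2 y' n)) \<longlonglongrightarrow> ext x y + ext x y'"
  proof -
    have "(\<lambda>n. \<beta> (seq1 x n) (seq2 y n) + \<beta> (seq1 x n) (seq2 y' n)) \<longlonglongrightarrow> ext x y + ext x y'"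
      by (intro tendsto_add ext_lim seq1 seq2)
    moreover have "\<beta> (seq1 x n) (seq2 y n + seq2 y' n) = \<beta> (seq1 x n) (seq2 y n) + \<beta> (seq1 x n) (seq2 y' n)" for n
      using seq1[of x] seq2[of y] seq2[of y'] by (simp add: conv_def radd)
    ultimately show ?thesis by simp
  qed
  ultimately show ?thesis by (rule LIMSEQ_unique)
qed

lemma ext_lsc: "ext (c *\<^sub>C x) y = cnj c * ext x y"
proof -
  have "(\<lambda>n. \<beta> (c *\<^sub>C seq1 x n) (seq2 y n)) \<longlonglongrightarrow> ext (c *\<^sub>C x) y"
    by (intro ext_lim conv_scale D1 seq1 seq2)
  moreover have "(\<lambda>n. \<beta> (c *\<^sub>C seq1 x n) (seq2 y n)) \<longlonglongrightarrow> cnj c * ext x y"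
  proof -
    have "(\<lambda>n. cnj c * \<beta> (seq1 x n) (seq2 y n)) \<longlonglongrightarrow> cnj c * ext x y"
      by (intro tendsto_mult tendsto_const ext_lim seq1 seq2)
    moreover have "\<beta> (c *\<^sub>C seq1 x n) (seq2 y n) = cnj c * \<beta> (seq1 x n) (seq2 y n)" for n
      using seq1[of x] seq2[of y] by (simp add: conv_def lsc)
    ultimately show ?thesis by simp
  qed
  ultimately show ?thesis by (rule LIMSEQ_unique)
qed

lemma ext_rsc: "ext x (c *\<^sub>C y) = c * ext x y"
proof -
  have "(\<lambda>n. \<beta> (seq1 x n) (c *\<^sub>C seq2 y n)) \<longlonglongrightarrow> ext x (c *\<^sub>C y)"
    by (intro ext_lim conv_scale D2 seq1 seq2)
  moreover have "(\<lambda>n. \<beta> (seq1 x n) (c *\<^sub>C seq2 y n)) \<longlonglongrightarrow> c * ext x y"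
  proof -
    have "(\<lambda>n. c * \<beta> (seq1 x n) (seq2 y n)) \<longlonglongrightarrow> c * ext x y"
      by (intro tendsto_mult tendsto_const ext_lim seq1 seq2)
    moreover have "\<beta> (seq1 x n) (c *\<^sub>C seq2 y n) = c * \<beta> (seq1 x n) (seq2 y n)" for n
      using seq1[of x] seq2[of y] by (simp add: conv_def rsc)
    ultimately show ?thesis by simp
  qed
  ultimately show ?thesis by (rule LIMSEQ_unique)
qed

lemma ext_bd: "cmod (ext x y) \<le> C * cnorm x * cnorm y"
proof (rule LIMSEQ_le)
  show "(\<lambda>n. cmod (\<beta> (seq1 x n) (seq2 y n))) \<longlonglongrightarrow> cmod (ext x y)"
    by (intro tendsto_norm ext_lim seq1 seq2)
  show "(\<lambda>n. C * cnorm (seq1 x n) * cnorm (seq2 y n)) \<longlonglongrightarrow> C * cnorm x * cnorm y"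
    by (intro tendsto_mult tendsto_const conv_norm[OF seq1] conv_norm[OF seq2])
  show "\<exists>N. \<forall>n\<ge>N. cmod (\<beta> (seq1 x n) (seq2 y n)) \<le> C * cnorm (seq1 x n) * cnorm (seq2 y n)"
    using seq1[of x] seq2[of y] by (auto simp: conv_def intro!: bd)
qed

lemma op_exists: "\<exists>T. bounded_clinear_op T \<and> (\<forall>x\<in>D1. \<forall>y\<in>D2. cinner x (T y) = \<beta> x y)"
proof -
  have rep: "\<exists>z. \<forall>x. ext x y = cinner x z" for y
  proof -
    have "\<exists>z. \<forall>x. cnj (ext x y) = cinner z x"
    proof (rule riesz)
      show "cnj (ext (x + x') y) = cnj (ext x y) + cnj (ext x' y)" for x x' by (simp add: ext_ladd)
      show "cnj (ext (c *\<^sub>C x) y) = c * cnj (ext x y)" for c x by (simp add: ext_lsc)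
      show "cmod (cnj (ext x y)) \<le> (C * cnorm y) * cnorm x" for x
        using ext_bd[of x y] by (simp add: mult_ac)
    qed
    then obtain z where "\<forall>x. cnj (ext x y) = cinner z x" by blast
    then have "\<forall>x. ext x y = cinner x z" by (metis cinner_commute complex_cnj_cnj)
    then show ?thesis by blast
  qed
  define T where "T y = (SOME z. \<forall>x. ext x y = cinner x z)" for y
  have T: "ext x y = cinner x (T y)" for x y
    unfolding T_def using someI_ex[OF rep[of y]] by blast
  have "bounded_clinear_op T"
  proof (rule bop_intro[where C = C])
    show "T (y + y') = T y + T y'" for y y'
      by (rule cinner_ext_right) (simp add: cinner_add_right ext_radd flip: T)
    show "T (c *\<^sub>C y) = c *\<^sub>C T y" for c y
      by (rule cinner_ext_right) (simp add: cinner_scaleC_right ext_rsc flip: T)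
    show "cnorm (T y) \<le> C * cnorm y" for y
    proof -
      have "(cnorm (T y))\<^sup>2 = Re (ext (T y) y)" by (simp add: T cnorm_sq)
      also have "\<dots> \<le> cmod (ext (T y) y)" by (rule complex_Re_le_cmod)
      also have "\<dots> \<le> C * cnorm (T y) * cnorm y" by (rule ext_bd)
      finally have h: "cnorm (T y) * cnorm (T y) \<le> cnorm (T y) * (C * cnorm y)"
        by (simp add: power2_eq_square mult_ac)
      show ?thesis
      proof (cases "cnorm (T y) = 0")
        case True then show ?thesis using C by simp
      next
        case False then have "cnorm (T y) > 0" by (simp add: order_less_le)
        then show ?thesis using h by simp
      qed
    qed
  qed
  then show ?thesis using T ext_eq by metis
qed

end

lemma form_to_op:
  fixes \<beta> :: "'a::chilbert_space \<Rightarrow> 'b::chilbert_space \<Rightarrow> complex"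
  assumes "bform D1 D2 \<beta> C"
  shows "\<exists>T. bounded_clinear_op T \<and> (\<forall>x\<in>D1. \<forall>y\<in>D2. cinner x (T y) = \<beta> x y)"
  using bform.op_exists[OF assms] .




lemma adjoint_exists:
  fixes T :: "'a::chilbert_space \<Rightarrow> 'b::chilbert_space"
  assumes "bounded_clinear_op T"
  shows "\<exists>T'. bounded_clinear_op T' \<and> (\<forall>x y. cinner x (T' y) = cinner (T x) y)"
proof -
  obtain C where C: "C > 0" "\<forall>x. cnorm (T x) \<le> C * cnorm x" using bop_bound[OF assms] by auto
  have "bform (UNIV::'a set) (UNIV::'b set) (\<lambda>x y. cinner (T x) y) C"
  proof
    show "dsub (UNIV::'a set)" "dsub (UNIV::'b set)" by (rule dsub_UNIV)+
    show "cinner (T (x + x')) y = cinner (T x) y + cinner (T x') y" for x x' y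
      by (simp add: bop_add[OF assms] cinner_add_left)
    show "cinner (T (c *\<^sub>C x)) y = cnj c * cinner (T x) y" for c x y
      by (simp add: bop_scale[OF assms] cinner_scaleC_left)
    show "cinner (T x) (y + y') = cinner (T x) y + cinner (T x) y'" for x y y'
      by (simp add: cinner_add_right)
    show "cinner (T x) (c *\<^sub>C y) = c * cinner (T x) y" for c x y
      by (simp add: cinner_scaleC_right)
    show "cmod (cinner (T x) y) \<le> C * cnorm x * cnorm y" for x y
    proof -
      have "cmod (cinner (T x) y) \<le> cnorm (T x) * cnorm y" by (rule cinner_CS)
      also have "\<dots> \<le> C * cnorm x * cnorm y" using C by (intro mult_right_mono) auto
      finally show ?thesis .
    qed
    show "0 \<le> C" using C by simp
  qed
  from form_to_op[OF this] show ?thesis by auto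
qed

section \<open>Countably additive operator valued set functions\<close>

lemma ca_empty:
  fixes \<Phi> :: "'x set \<Rightarrow> 'k::complex_inner \<Rightarrow> 'k"
  assumes ca: "\<And>x y F. range F \<subseteq> sets M \<Longrightarrow> disjoint_family F \<Longrightarrow>
      (\<lambda>n. cinner x (\<Phi> (F n) y)) sums cinner x (\<Phi> (\<Union>n. F n) y)"
  shows "\<Phi> {} y = 0"
proof -
  have "cinner x (\<Phi> {} y) = 0" for x
  proof -
    have "(\<lambda>n. cinner x (\<Phi> {} y)) sums cinner x (\<Phi> {} y)"
      using ca[of "\<lambda>n. {}" x y] by (simp add: disjoint_family_on_def)
    then have "(\<lambda>n. cinner x (\<Phi> {} y)) \<longlonglongrightarrow> 0"
      by (intro summable_LIMSEQ_zero) (auto simp: sums_iff)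
    then show ?thesis by (simp add: LIMSEQ_const_iff)
  qed
  then show ?thesis by (metis cinner_eq_zero_iff)
qed

lemma ca_union:
  fixes \<Phi> :: "'x set \<Rightarrow> 'k::complex_inner \<Rightarrow> 'k"
  assumes ca: "\<And>x y F. range F \<subseteq> sets M \<Longrightarrow> disjoint_family F \<Longrightarrow>
      (\<lambda>n. cinner x (\<Phi> (F n) y)) sums cinner x (\<Phi> (\<Union>n. F n) y)"
    and AB: "A \<in> sets M" "B \<in> sets M" "A \<inter> B = {}"
  shows "\<Phi> (A \<union> B) y = \<Phi> A y + \<Phi> B y"
proof (rule cinner_ext_right)
  fix x
  define F where "F n = (if n = 0 then A else if n = 1 then B else {})" for n :: nat
  have r: "range F \<subseteq> sets M" using AB by (auto simp: F_def)
  have "F m \<inter> F n = {}" if "m \<noteq> n" for m n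
    using that AB(3) by (cases "m = 0"; cases "n = 0"; cases "m = 1"; cases "n = 1") (simp_all add: F_def Int_commute)
  then have d: "disjoint_family F" unfolding disjoint_family_on_def by blast
  have u: "(\<Union>n. F n) = A \<union> B"
  proof
    show "(\<Union>n. F n) \<subseteq> A \<union> B" by (auto simp: F_def split: if_splits)
    show "A \<union> B \<subseteq> (\<Union>n. F n)"
    proof
      fix z assume "z \<in> A \<union> B"
      then have "z \<in> F 0 \<or> z \<in> F 1" by (auto simp: F_def)
      then show "z \<in> (\<Union>n. F n)" by blast
    qed
  qed
  have e: "\<Phi> {} y = 0" by (rule ca_empty[OF ca])
  have "(\<lambda>n. cinner x (\<Phi> (F n) y)) sums cinner x (\<Phi> (A \<union> B) y)"
    using ca[OF r d, of x y] by (simp add: u)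
  moreover have "(\<lambda>n. cinner x (\<Phi> (F n) y)) sums (\<Sum>n\<in>{0,1}. cinner x (\<Phi> (F n) y))"
    by (rule sums_finite) (auto simp: F_def e)
  ultimately have "cinner x (\<Phi> (A \<union> B) y) = (\<Sum>n\<in>{0,1}. cinner x (\<Phi> (F n) y))"
    by (rule sums_unique2)
  then show "cinner x (\<Phi> (A \<union> B) y) = cinner x (\<Phi> A y + \<Phi> B y)"
    by (simp add: F_def cinner_add_right)
qed

lemma ca_finite:
  fixes \<Phi> :: "'x set \<Rightarrow> 'k::complex_inner \<Rightarrow> 'k"
  assumes ca: "\<And>x y F. range F \<subseteq> sets M \<Longrightarrow> disjoint_family F \<Longrightarrow>
      (\<lambda>n. cinner x (\<Phi> (F n) y)) sums cinner x (\<Phi> (\<Union>n. F n) y)"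
    and fin: "finite S" and P: "\<And>\<sigma>. \<sigma> \<in> S \<Longrightarrow> P \<sigma> \<in> sets M" and dj: "disjoint_family_on P S"
  shows "\<Phi> (\<Union>\<sigma>\<in>S. P \<sigma>) y = (\<Sum>\<sigma>\<in>S. \<Phi> (P \<sigma>) y)"
  using fin P dj
proof (induction S rule: finite_induct)
  case empty
  have "\<Phi> {} y = 0" by (rule ca_empty[OF ca])
  then show ?case by simp
next
  case (insert \<tau> S)
  have dS: "disjoint_family_on P S" using insert.prems(2) by (auto simp: disjoint_family_on_def)
  have m: "(\<Union>\<sigma>\<in>S. P \<sigma>) \<in> sets M" using insert.prems(1) insert.hyps(1) by (intro sets.finite_UN) auto
  have "P \<tau> \<inter> P \<sigma> = {}" if "\<sigma> \<in> S" for \<sigma>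
  proof -
    have "\<tau> \<noteq> \<sigma>" using insert.hyps(2) that by blast
    then show ?thesis using insert.prems(2) that unfolding disjoint_family_on_def by blast
  qed
  then have "P \<tau> \<inter> (\<Union>\<sigma>\<in>S. P \<sigma>) = {}" by blast
  then have "\<Phi> (P \<tau> \<union> (\<Union>\<sigma>\<in>S. P \<sigma>)) y = \<Phi> (P \<tau>) y + \<Phi> (\<Union>\<sigma>\<in>S. P \<sigma>) y"
    using insert.prems(1) m by (intro ca_union[OF ca]) auto
  moreover have "\<Phi> (\<Union>\<sigma>\<in>S. P \<sigma>) y = (\<Sum>\<sigma>\<in>S. \<Phi> (P \<sigma>) y)"
    using insert.IH insert.prems(1) dS by blast
  ultimately show ?case using insert.hyps by simp
qed

lemma cp_instrument_cong:
  assumes "cp_instrument M \<Phi>" "\<And>A a x. A \<in> sets M \<Longrightarrow> \<Psi> A a x = \<Phi> A a x"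
  shows "cp_instrument M \<Psi>"
proof -
  have e: "A \<in> sets M \<Longrightarrow> \<Psi> A = \<Phi> A" for A using assms(2) by (intro ext) auto
  have 1: "\<forall>A\<in>sets M. cp_map (\<Psi> A)"
  proof
    fix A assume A: "A \<in> sets M"
    then have "cp_map (\<Phi> A)" using assms(1) by (simp add: cp_instrument_def)
    then show "cp_map (\<Psi> A)" using e[OF A] by simp
  qed
  have 2: "(\<lambda>n. cinner h (\<Psi> (F n) a k)) sums cinner h (\<Psi> (\<Union>n. F n) a k)"
    if F: "range F \<subseteq> sets M" "disjoint_family F" for a h k and F :: "nat \<Rightarrow> _"
  proof -
    have U: "(\<Union>n. F n) \<in> sets M" using F by (intro sets.countable_nat_UN) auto
    have Fn: "\<Psi> (F n) = \<Phi> (F n)" for n using F e by auto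
    have "(\<lambda>n. cinner h (\<Phi> (F n) a k)) sums cinner h (\<Phi> (\<Union>n. F n) a k)"
      using assms(1) F unfolding cp_instrument_def by blast
    then show ?thesis using Fn e[OF U] by simp
  qed
  show ?thesis unfolding cp_instrument_def using 1 2 by blast
qed




locale bidil =
  fixes M :: "'x measure" and I :: "'x set \<Rightarrow> 'a::cstar_algebra \<Rightarrow> 'h::chilbert_space \<Rightarrow> 'h"
    and \<pi> :: "'a \<Rightarrow> 'k::chilbert_space \<Rightarrow> 'k" and E :: "'x set \<Rightarrow> 'k \<Rightarrow> 'k" and V :: "'h \<Rightarrow> 'k"
  assumes cpI: "cp_instrument M I" and md: "minimal_bidilation M I \<pi> E V"
begin

lemma hom: "unital_star_hom \<pi>" using md by (simp add: minimal_bidilation_def)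
lemma spec: "spectral_measure M E" using md by (simp add: minimal_bidilation_def)
lemma Vb: "bounded_clinear_op V" using md by (simp add: minimal_bidilation_def)
lemma Irep: "A \<in> sets M \<Longrightarrow> cinner h (I A a k) = cinner (V h) (\<pi> a (E A (V k)))"
  using md by (simp add: minimal_bidilation_def)
lemma dense: "norm_dense (cspan {\<pi> a (E A (V h)) | a A h. A \<in> sets M})"
  using md by (simp add: minimal_bidilation_def)
lemma comm0: "A \<in> sets M \<Longrightarrow> \<pi> a (E A x) = E A (\<pi> a x)"
proof -
  assume "A \<in> sets M"
  then have "\<pi> a \<circ> E A = E A \<circ> \<pi> a" using md by (simp add: minimal_bidilation_def)
  then show ?thesis by (metis comp_apply)
qed

lemma pib: "bounded_clinear_op (\<pi> a)" using hom by (simp add: unital_star_hom_def)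
lemma pi_add: "\<pi> (a + b) x = \<pi> a x + \<pi> b x" using hom by (simp add: unital_star_hom_def)
lemma pi_scale: "\<pi> (c *\<^sub>C a) x = c *\<^sub>C \<pi> a x" using hom by (simp add: unital_star_hom_def)
lemma pi_mult: "\<pi> (a * b) x = \<pi> a (\<pi> b x)" using hom by (simp add: unital_star_hom_def)
lemma pi_one: "\<pi> 1 x = x" using hom by (simp add: unital_star_hom_def)
lemma pi_adj: "cinner (\<pi> (star a) x) y = cinner x (\<pi> a y)"
  using hom by (simp add: unital_star_hom_def is_adjoint_def)
lemma pi_adj2: "cinner (\<pi> a x) y = cinner x (\<pi> (star a) y)"
  using pi_adj[of "star a" x y] by (simp add: star_star)

lemma Eb: "A \<in> sets M \<Longrightarrow> bounded_clinear_op (E A)" using spec by (simp add: spectral_measure_def)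
lemma E_idem: "A \<in> sets M \<Longrightarrow> E A (E A x) = E A x"
proof -
  assume "A \<in> sets M"
  then have "E A \<circ> E A = E A" using spec by (simp add: spectral_measure_def)
  then show ?thesis by (metis comp_apply)
qed
lemma E_adj: "A \<in> sets M \<Longrightarrow> cinner (E A x) y = cinner x (E A y)"
  using spec by (simp add: spectral_measure_def is_adjoint_def)
lemma E_space: "E (space M) x = x" using spec by (simp add: spectral_measure_def)
lemma E_ca: "range F \<subseteq> sets M \<Longrightarrow> disjoint_family F \<Longrightarrow>
    (\<lambda>n. cinner x (E (F n) y)) sums cinner x (E (\<Union>n. F n) y)"
  using spec by (simp add: spectral_measure_def)

lemma E_union:
  assumes "A \<in> sets M" "B \<in> sets M" "A \<inter> B = {}"
  shows "E (A \<union> B) x = E A x + E B x"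
  by (rule ca_union[of M E, OF E_ca assms])

lemma E_disj:
  assumes A: "A \<in> sets M" and B: "B \<in> sets M" and AB: "A \<inter> B = {}"
  shows "E A (E B x) = 0"
proof -
  have AuB: "A \<union> B \<in> sets M" using A B by auto
  have s: "E A (E B z) = - E B (E A z)" for z
  proof -
    have "E (A \<union> B) (E (A \<union> B) z) = E (A \<union> B) z" by (rule E_idem[OF AuB])
    then have "E A (E A z + E B z) + E B (E A z + E B z) = E A z + E B z"
      using E_union[OF A B AB] by simp
    then have "E A z + E A (E B z) + (E B (E A z) + E B z) = E A z + E B z"
      by (simp add: bop_add[OF Eb[OF A]] bop_add[OF Eb[OF B]] E_idem A B)
    then have "E A (E B z) + E B (E A z) = 0"
      by (simp add: algebra_simps)
    then show ?thesis by (simp add: eq_neg_iff_add_eq_0)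
  qed
  define t where "t = E A (E B x)"
  have t1: "E A t = t" by (simp add: t_def E_idem A)
  have "E A t = E A (- E B (E A x))" by (simp add: t_def s)
  also have "\<dots> = - E A (E B (E A x))" by (simp add: bop_minus[OF Eb[OF A]])
  also have "\<dots> = E B (E A (E A x))" by (simp add: s)
  also have "\<dots> = E B (E A x)" by (simp add: E_idem A)
  also have "\<dots> = - t" by (simp add: t_def s)
  finally have "t = - t" using t1 by simp
  then have "t + t = 0" by (metis add.right_inverse)
  then show ?thesis using double_zero_vec t_def by blast
qed

lemma E_mult:
  assumes A: "A \<in> sets M" and B: "B \<in> sets M"
  shows "E A (E B x) = E (A \<inter> B) x"
proof -
  have AB: "A \<inter> B \<in> sets M" "B - A \<in> sets M" "A - B \<in> sets M" using A B by auto
  have eB: "E B y = E (A \<inter> B) y + E (B - A) y" for y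
  proof -
    have "B = (A \<inter> B) \<union> (B - A)" by blast
    then have "E B y = E ((A \<inter> B) \<union> (B - A)) y" by simp
    also have "\<dots> = E (A \<inter> B) y + E (B - A) y" by (rule E_union) (use AB in auto)
    finally show ?thesis .
  qed
  have eA: "E A y = E (A \<inter> B) y + E (A - B) y" for y
  proof -
    have "A = (A \<inter> B) \<union> (A - B)" by blast
    then have "E A y = E ((A \<inter> B) \<union> (A - B)) y" by simp
    also have "\<dots> = E (A \<inter> B) y + E (A - B) y" by (rule E_union) (use AB in auto)
    finally show ?thesis .
  qed
  have "E A (E B x) = E A (E (A \<inter> B) x) + E A (E (B - A) x)"
    by (simp add: eB bop_add[OF Eb[OF A]])
  also have "E A (E (B - A) x) = 0" by (rule E_disj) (use A AB in auto)
  also have "E A (E (A \<inter> B) x) = E (A \<inter> B) (E (A \<inter> B) x) + E (A - B) (E (A \<inter> B) x)"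
    by (rule eA)
  also have "E (A - B) (E (A \<inter> B) x) = 0" by (rule E_disj) (use AB in auto)
  also have "E (A \<inter> B) (E (A \<inter> B) x) = E (A \<inter> B) x" by (rule E_idem[OF AB(1)])
  finally show ?thesis by simp
qed

definition Gen where "Gen = {\<pi> a (E A (V h)) | a A h. A \<in> sets M}"

lemma span_orth:
  assumes "\<And>g. g \<in> Gen \<Longrightarrow> cinner g x = 0" "y \<in> cspan Gen"
  shows "cinner y x = 0"
proof -
  have "\<exists>(n::nat) c s. (\<forall>i<n. s i \<in> Gen) \<and> y = (\<Sum>i<n. c i *\<^sub>C s i)"
    using assms(2) by (simp add: cspan_def)
  then obtain n c s where s: "\<forall>i<(n::nat). s i \<in> Gen" and y: "y = (\<Sum>i<n. c i *\<^sub>C s i)"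
    by blast
  show ?thesis using s assms(1) by (simp add: y cinner_sum_left cinner_scaleC_left)
qed

lemma dense_zero:
  assumes "\<And>g. g \<in> Gen \<Longrightarrow> cinner g x = 0"
  shows "x = 0"
proof (rule ccontr)
  assume "x \<noteq> 0"
  then have pos: "cnorm x > 0" using cnorm_ge_zero[of x] cnorm_eq_zero[of x] by linarith
  obtain y where y: "y \<in> cspan Gen" "cnorm (x - y) < cnorm x"
    using dense pos unfolding norm_dense_def Gen_def by blast
  have "cinner y x = 0" by (rule span_orth[OF assms y(1)])
  then have "(cnorm x)\<^sup>2 = Re (cinner (x - y) x)" by (simp add: cnorm_sq cinner_diff_left)
  also have "\<dots> \<le> cnorm (x - y) * cnorm x" by (rule Re_cinner_le)
  also have "\<dots> < cnorm x * cnorm x" using y(2) pos by (intro mult_strict_right_mono) auto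
  finally show False by (simp add: power2_eq_square)
qed

lemma bop_gen_zero:
  assumes X: "bounded_clinear_op X" and g: "\<And>g. g \<in> Gen \<Longrightarrow> X g = 0"
  shows "X x = 0"
proof (rule ccontr)
  assume nz: "X x \<noteq> 0"
  obtain C where C: "C > 0" "\<forall>x. cnorm (X x) \<le> C * cnorm x" using bop_bound[OF X] by auto
  have sp: "X y = 0" if ysp: "y \<in> cspan Gen" for y
  proof -
    have "\<exists>(n::nat) c s. (\<forall>i<n. s i \<in> Gen) \<and> y = (\<Sum>i<n. c i *\<^sub>C s i)"
      using ysp by (simp add: cspan_def)
    then obtain n c s where s: "\<forall>i<(n::nat). s i \<in> Gen" and y: "y = (\<Sum>i<n. c i *\<^sub>C s i)"
      by blast
    show ?thesis using s g by (simp add: y bop_sum[OF X] bop_scale[OF X])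
  qed
  have pos: "cnorm (X x) > 0" using nz cnorm_ge_zero[of "X x"] cnorm_eq_zero[of "X x"] by linarith
  have e: "cnorm (X x) / C > 0" using pos C by simp
  obtain y where y: "y \<in> cspan Gen" "cnorm (x - y) < cnorm (X x) / C"
    using dense[unfolded norm_dense_def, rule_format, OF e, of x] unfolding Gen_def by blast
  have "X x = X (x - y)" using sp[OF y(1)] by (simp add: bop_diff[OF X])
  then have "cnorm (X x) \<le> C * cnorm (x - y)" using C by simp
  also have "\<dots> < C * (cnorm (X x) / C)" using y(2) C by (intro mult_strict_left_mono) auto
  also have "\<dots> = cnorm (X x)" using C by simp
  finally show False by simp
qed

lemma gen_mem: "A \<in> sets M \<Longrightarrow> \<pi> a (E A (V h)) \<in> Gen"
  unfolding Gen_def by blast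

definition Vs where "Vs = (SOME T'. bounded_clinear_op T' \<and> (\<forall>x y. cinner x (T' y) = cinner (V x) y))"

lemma Vs: "bounded_clinear_op Vs \<and> (\<forall>x y. cinner x (Vs y) = cinner (V x) y)"
  unfolding Vs_def using adjoint_exists[OF Vb] by (rule someI_ex)
lemma Vsb: "bounded_clinear_op Vs" using Vs by blast
lemma Vs_adj: "cinner x (Vs y) = cinner (V x) y" using Vs by blast

lemma I_eq: "A \<in> sets M \<Longrightarrow> I A a k = Vs (\<pi> a (E A (V k)))"
  by (rule cinner_ext_right) (simp add: Irep Vs_adj)


lemma E_fix: "A \<in> sets M \<Longrightarrow> E A (\<pi> a (E A y)) = \<pi> a (E A y)"
  by (simp add: comm0[symmetric] E_idem)

lemma instr_R:
  assumes Rb: "bounded_clinear_op R" and Rsa: "\<And>x y. cinner (R x) y = cinner x (R y)"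
    and Rpi: "\<And>a x. R (\<pi> a x) = \<pi> a (R x)" and RE: "\<And>A x. A \<in> sets M \<Longrightarrow> R (E A x) = E A (R x)"
    and Rpos: "\<And>x. 0 \<le> Re (cinner x (R x))"
  shows "cp_instrument M (\<lambda>A a h. Vs (R (\<pi> a (E A (V h)))))"
proof -
  have cp: "cp_map (\<lambda>a h. Vs (R (\<pi> a (E A (V h)))))" if A: "A \<in> sets M" for A
  proof -
    have p1: "(\<lambda>h. Vs (R (\<pi> (a + b) (E A (V h))))) = (\<lambda>x. Vs (R (\<pi> a (E A (V x)))) + Vs (R (\<pi> b (E A (V x)))))" for a b
      by (simp add: pi_add bop_add[OF Rb] bop_add[OF Vsb])
    have p2: "(\<lambda>h. Vs (R (\<pi> (c *\<^sub>C a) (E A (V h))))) = (\<lambda>x. c *\<^sub>C Vs (R (\<pi> a (E A (V x)))))" for c a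
      by (simp add: pi_scale bop_scale[OF Rb] bop_scale[OF Vsb])
    have p3: "bounded_clinear_op (\<lambda>h. Vs (R (\<pi> a (E A (V h)))))" for a
      by (intro bop_comp[OF Vsb] bop_comp[OF Rb] bop_comp[OF pib] bop_comp[OF Eb[OF A] Vb])
    have p4: "Im (\<Sum>i<n. \<Sum>j<n. cinner (h i) (Vs (R (\<pi> (star (a i) * a j) (E A (V (h j))))))) = 0 \<and>
        0 \<le> Re (\<Sum>i<n. \<Sum>j<n. cinner (h i) (Vs (R (\<pi> (star (a i) * a j) (E A (V (h j)))))))"
      for n :: nat and a :: "nat \<Rightarrow> 'a" and h :: "nat \<Rightarrow> 'h"
    proof -
      define \<xi> where "\<xi> j = \<pi> (a j) (E A (V (h j)))" for j
      have trm: "cinner (h i) (Vs (R (\<pi> (star (a i) * a j) (E A (V (h j)))))) = cinner (\<xi> i) (R (\<xi> j))" for i j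
      proof -
        have fix_j: "R (\<xi> j) = E A (R (\<xi> j))"
          using E_fix[OF A, of "a j" "V (h j)"] RE[OF A, of "\<xi> j"] by (simp add: \<xi>_def)
        have "cinner (h i) (Vs (R (\<pi> (star (a i) * a j) (E A (V (h j)))))) =
              cinner (V (h i)) (\<pi> (star (a i)) (R (\<xi> j)))"
          by (simp add: Vs_adj pi_mult Rpi \<xi>_def)
        also have "\<dots> = cinner (\<pi> (a i) (V (h i))) (R (\<xi> j))" by (simp add: pi_adj2)
        also have "\<dots> = cinner (\<pi> (a i) (V (h i))) (E A (R (\<xi> j)))" by (simp flip: fix_j)
        also have "\<dots> = cinner (\<xi> i) (R (\<xi> j))" by (simp add: E_adj[OF A, symmetric] comm0[OF A] \<xi>_def)
        finally show ?thesis .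
      qed
      define s where "s = (\<Sum>j<n. \<xi> j)"
      have "(\<Sum>i<n. \<Sum>j<n. cinner (h i) (Vs (R (\<pi> (star (a i) * a j) (E A (V (h j))))))) = cinner s (R s)"
        by (simp add: trm s_def cinner_sum_left cinner_sum_right bop_sum[OF Rb]) (rule sum.swap)
      moreover have "Im (cinner s (R s)) = 0"
      proof -
        have "cinner s (R s) = cnj (cinner s (R s))" by (metis Rsa cinner_commute)
        then show ?thesis by (metis cnj.sel(2) equation_minus_iff neg_equal_zero)
      qed
      ultimately show ?thesis using Rpos[of s] by simp
    qed
    show ?thesis unfolding cp_map_def using p1 p2 p3 p4 by blast
  qed
  have ident: "cinner h (Vs (R (\<pi> a (E B (V k))))) = cinner (\<pi> (star a) (R (V h))) (E B (V k))" for h a B k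
    by (simp add: Vs_adj Rsa[symmetric] pi_adj)
  show ?thesis
    unfolding cp_instrument_def
  proof (intro conjI ballI allI impI)
    show "cp_map (\<lambda>a h. Vs (R (\<pi> a (E A (V h)))))" if "A \<in> sets M" for A using cp that by blast
  next
    fix a h k and F :: "nat \<Rightarrow> 'x set"
    assume "range F \<subseteq> sets M" "disjoint_family F"
    then show "(\<lambda>n. cinner h (Vs (R (\<pi> a (E (F n) (V k)))))) sums cinner h (Vs (R (\<pi> a (E (\<Union>n. F n) (V k)))))"
      unfolding ident by (rule E_ca)
  qed
qed


lemma sa_scalar:
  assumes pure: "pure_instrument M I" and Sb: "bounded_clinear_op S"
    and Ssa: "\<And>x y. cinner (S x) y = cinner x (S y)"
    and Spi: "\<And>a x. S (\<pi> a x) = \<pi> a (S x)" and SE: "\<And>A x. A \<in> sets M \<Longrightarrow> S (E A x) = E A (S x)"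
  shows "\<exists>c. \<forall>x. S x = c *\<^sub>C x"
proof -
  obtain C where C: "C > 0" "\<And>x. cnorm (S x) \<le> C * cnorm x" using bop_bound[OF Sb] by auto
  define \<kappa> where "\<kappa> = complex_of_real (1 / (2 * C))"
  define \<mu> where "\<mu> = complex_of_real C"
  define R where "R x = \<kappa> *\<^sub>C (S x + \<mu> *\<^sub>C x)" for x
  have Rb: "bounded_clinear_op R" unfolding R_def by (intro bop_smult bop_plus Sb bop_scalar)
  have Rsa: "cinner (R x) y = cinner x (R y)" for x y
    by (simp add: R_def cinner_scaleC_left cinner_scaleC_right cinner_add_left cinner_add_right Ssa \<kappa>_def \<mu>_def)
  have Rpi: "R (\<pi> a x) = \<pi> a (R x)" for a x
    by (simp add: R_def Spi bop_add[OF pib] bop_scale[OF pib])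
  have RE: "R (E A x) = E A (R x)" if "A \<in> sets M" for A x
    by (simp add: R_def SE[OF that] bop_add[OF Eb[OF that]] bop_scale[OF Eb[OF that]])
  have Rre: "Re (cinner x (R x)) = (1 / (2 * C)) * (Re (cinner x (S x)) + C * Re (cinner x x))" for x
    by (simp add: R_def cinner_scaleC_right cinner_add_right \<kappa>_def \<mu>_def)
  have Sre: "\<bar>Re (cinner x (S x))\<bar> \<le> C * Re (cinner x x)" for x
  proof -
    have "Re (cinner x (S x)) \<le> cnorm x * cnorm (S x)" by (rule Re_cinner_le)
    moreover have "- Re (cinner x (S x)) \<le> cnorm x * cnorm (S x)"
      using Re_cinner_le[of "- x" "S x"] by (simp add: cinner_minus_left cnorm_minus)
    moreover have "cnorm x * cnorm (S x) \<le> cnorm x * (C * cnorm x)" using C(2)[of x] by (intro mult_left_mono) auto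
    ultimately show ?thesis by (simp add: cnorm_sq[symmetric] power2_eq_square abs_le_iff mult_ac)
  qed
  have Rpos: "0 \<le> Re (cinner x (R x))" for x
    using Sre[of x] C(1) cinner_ge_zero[of x] unfolding Rre by (intro mult_nonneg_nonneg) (auto simp: abs_le_iff)
  have Rle: "Re (cinner x (R x)) \<le> Re (cinner x x)" for x
  proof -
    have "Re (cinner x (S x)) + C * Re (cinner x x) \<le> (2 * C) * Re (cinner x x)" using Sre[of x] by (simp add: abs_le_iff)
    then have "(1 / (2 * C)) * (Re (cinner x (S x)) + C * Re (cinner x x)) \<le> (1 / (2 * C)) * ((2 * C) * Re (cinner x x))"
      using C(1) by (intro mult_left_mono) auto
    then show ?thesis using C(1) unfolding Rre by simp
  qed
  define R' where "R' x = x - R x" for x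
  have R'b: "bounded_clinear_op R'" unfolding R'_def by (intro bop_minus_op bop_id Rb)
  have R'sa: "cinner (R' x) y = cinner x (R' y)" for x y
    by (simp add: R'_def cinner_diff_left cinner_diff_right Rsa)
  have R'pi: "R' (\<pi> a x) = \<pi> a (R' x)" for a x
    by (simp add: R'_def Rpi bop_diff[OF pib])
  have R'E: "R' (E A x) = E A (R' x)" if "A \<in> sets M" for A x
    by (simp add: R'_def RE[OF that] bop_diff[OF Eb[OF that]])
  have R'pos: "0 \<le> Re (cinner x (R' x))" for x
    using Rle[of x] by (simp add: R'_def cinner_diff_right)
  define J where "J A a h = Vs (R (\<pi> a (E A (V h))))" for A a h
  have cpJ: "cp_instrument M J" unfolding J_def by (rule instr_R[OF Rb Rsa Rpi RE Rpos])
  have cpJ': "cp_instrument M (\<lambda>A a x. I A a x - J A a x)"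
  proof (rule cp_instrument_cong[OF instr_R[OF R'b R'sa R'pi R'E R'pos]])
    fix A a x assume "A \<in> sets M"
    then show "I A a x - J A a x = Vs (R' (\<pi> a (E A (V x))))"
      by (simp add: I_eq J_def R'_def bop_diff[OF Vsb])
  qed
  have "dominated_instrument M J I" unfolding dominated_instrument_def using cpJ cpJ' by blast
  then obtain t :: real where t: "\<forall>A\<in>sets M. \<forall>a. J A a = (\<lambda>x. complex_of_real t *\<^sub>C I A a x)"
    using pure unfolding pure_instrument_def by blast
  define X where "X z = R z - complex_of_real t *\<^sub>C z" for z
  have Xb: "bounded_clinear_op X" unfolding X_def by (intro bop_minus_op Rb bop_scalar)
  have Xpi: "X (\<pi> a x) = \<pi> a (X x)" for a x
    by (simp add: X_def Rpi bop_diff[OF pib] bop_scale[OF pib])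
  have XE: "X (E A x) = E A (X x)" if "A \<in> sets M" for A x
    by (simp add: X_def RE[OF that] bop_diff[OF Eb[OF that]] bop_scale[OF Eb[OF that]])
  have key: "cinner (V h) (X (\<pi> a (E A (V k)))) = 0" if A: "A \<in> sets M" for h a A k
  proof -
    have "cinner (V h) (R (\<pi> a (E A (V k)))) = cinner h (J A a k)" by (simp add: J_def Vs_adj)
    also have "\<dots> = complex_of_real t * cinner (V h) (\<pi> a (E A (V k)))"
      using t A by (simp add: cinner_scaleC_right Irep)
    finally show ?thesis by (simp add: X_def cinner_diff_right cinner_scaleC_right)
  qed
  have Xgen: "X g = 0" if g: "g \<in> Gen" for g
  proof (rule dense_zero)
    fix g1 assume "g1 \<in> Gen"
    then obtain b B h where g1: "g1 = \<pi> b (E B (V h))" "B \<in> sets M" unfolding Gen_def by blast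
    obtain a A k where g2: "g = \<pi> a (E A (V k))" "A \<in> sets M" using g unfolding Gen_def by blast
    have BA: "B \<inter> A \<in> sets M" using g1 g2 by auto
    have "cinner g1 (X g) = cinner (V h) (E B (\<pi> (star b) (X g)))"
      by (simp add: g1 pi_adj2 E_adj)
    also have "\<dots> = cinner (V h) (X (E B (\<pi> (star b) g)))" by (simp add: Xpi XE g1(2))
    also have "E B (\<pi> (star b) g) = \<pi> (star b * a) (E (B \<inter> A) (V k))"
      by (simp add: g2 pi_mult comm0[OF g1(2), symmetric] E_mult g1(2))
    also have "cinner (V h) (X (\<pi> (star b * a) (E (B \<inter> A) (V k)))) = 0" by (rule key[OF BA])
    finally show "cinner g1 (X g) = 0" .
  qed
  have X0: "X x = 0" for x by (rule bop_gen_zero[OF Xb Xgen])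
  have "\<kappa> \<noteq> 0" using C(1) by (simp add: \<kappa>_def)
  have "S x = (1 / \<kappa> * complex_of_real t - \<mu>) *\<^sub>C x" for x
  proof -
    have "R x = complex_of_real t *\<^sub>C x" using X0[of x] by (simp add: X_def)
    then have "\<kappa> *\<^sub>C (S x + \<mu> *\<^sub>C x) = complex_of_real t *\<^sub>C x" by (simp add: R_def)
    then have "(1 / \<kappa>) *\<^sub>C (\<kappa> *\<^sub>C (S x + \<mu> *\<^sub>C x)) = (1 / \<kappa>) *\<^sub>C (complex_of_real t *\<^sub>C x)" by simp
    then have "S x + \<mu> *\<^sub>C x = (1 / \<kappa> * complex_of_real t) *\<^sub>C x"
      using \<open>\<kappa> \<noteq> 0\<close> by (simp add: scaleC_scaleC scaleC_one)
    then show ?thesis by (simp add: scaleC_diff_left eq_diff_eq)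
  qed
  then show ?thesis by blast
qed

lemma scalar_in_comm: "(\<lambda>x. c *\<^sub>C x) \<in> commutant {\<pi> a \<circ> E A | a A. A \<in> sets M}"
  unfolding commutant_def
proof (intro CollectI conjI ballI bop_scalar)
  fix s assume "s \<in> {\<pi> a \<circ> E A | a A. A \<in> sets M}"
  then obtain a A where s: "s = \<pi> a \<circ> E A" "A \<in> sets M" by blast
  show "(\<lambda>x. c *\<^sub>C x) \<circ> s = s \<circ> (\<lambda>x. c *\<^sub>C x)"
    by (rule ext) (simp add: s bop_scale[OF pib] bop_scale[OF Eb[OF s(2)]])
qed

lemma comm_scalar:
  assumes pure: "pure_instrument M I" and T: "T \<in> commutant {\<pi> a \<circ> E A | a A. A \<in> sets M}"
  shows "T \<in> range (\<lambda>c. \<lambda>x. c *\<^sub>C x)"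
proof -
  have Tb: "bounded_clinear_op T" using T by (simp add: commutant_def)
  have Tc: "T \<circ> (\<pi> a \<circ> E A) = (\<pi> a \<circ> E A) \<circ> T" if "A \<in> sets M" for a A
    using T that unfolding commutant_def by blast
  have Tpi: "T (\<pi> a x) = \<pi> a (T x)" for a x
    using fun_cong[OF Tc[of "space M" a], of x] by (simp add: E_space)
  have TE: "T (E A x) = E A (T x)" if "A \<in> sets M" for A x
    using fun_cong[OF Tc[OF that, of 1], of x] by (simp add: pi_one)
  obtain Ts where Ts: "bounded_clinear_op Ts" "\<And>x y. cinner x (Ts y) = cinner (T x) y"
    using adjoint_exists[OF Tb] by blast
  have Ts2: "cinner (Ts x) y = cinner x (T y)" for x y
    by (metis Ts(2) cinner_commute)
  have Tspi: "Ts (\<pi> a x) = \<pi> a (Ts x)" for a x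
  proof (rule cinner_ext_right)
    fix y
    have "cinner y (Ts (\<pi> a x)) = cinner (T y) (\<pi> a x)" by (simp add: Ts(2))
    also have "\<dots> = cinner (\<pi> (star a) (T y)) x" by (simp add: pi_adj)
    also have "\<dots> = cinner (\<pi> (star a) y) (Ts x)" by (simp add: Ts(2) flip: Tpi)
    also have "\<dots> = cinner y (\<pi> a (Ts x))" by (simp add: pi_adj)
    finally show "cinner y (Ts (\<pi> a x)) = cinner y (\<pi> a (Ts x))" .
  qed
  have TsE: "Ts (E A x) = E A (Ts x)" if A: "A \<in> sets M" for A x
  proof (rule cinner_ext_right)
    fix y
    have "cinner y (Ts (E A x)) = cinner (T y) (E A x)" by (simp add: Ts(2))
    also have "\<dots> = cinner (E A (T y)) x" by (simp add: E_adj[OF A])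
    also have "\<dots> = cinner (E A y) (Ts x)" by (simp add: Ts(2) flip: TE[OF A])
    also have "\<dots> = cinner y (E A (Ts x))" by (simp add: E_adj[OF A])
    finally show "cinner y (Ts (E A x)) = cinner y (E A (Ts x))" .
  qed
  define S1 where "S1 x = (1/2::complex) *\<^sub>C (T x + Ts x)" for x
  define S2 where "S2 x = (- \<i>/2) *\<^sub>C (T x - Ts x)" for x
  have "\<exists>c. \<forall>x. S1 x = c *\<^sub>C x"
  proof (rule sa_scalar[OF pure])
    show "bounded_clinear_op S1" unfolding S1_def by (intro bop_smult bop_plus Tb Ts(1))
    show "cinner (S1 x) y = cinner x (S1 y)" for x y
      by (simp add: S1_def cinner_scaleC_left cinner_scaleC_right cinner_add_left cinner_add_right Ts(2) Ts2)
    show "S1 (\<pi> a x) = \<pi> a (S1 x)" for a x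
      by (simp add: S1_def Tpi Tspi bop_add[OF pib] bop_scale[OF pib])
    show "S1 (E A x) = E A (S1 x)" if "A \<in> sets M" for A x
      by (simp add: S1_def TE[OF that] TsE[OF that] bop_add[OF Eb[OF that]] bop_scale[OF Eb[OF that]])
  qed
  then obtain c1 where c1: "\<And>x. S1 x = c1 *\<^sub>C x" by blast
  have "\<exists>c. \<forall>x. S2 x = c *\<^sub>C x"
  proof (rule sa_scalar[OF pure])
    show "bounded_clinear_op S2" unfolding S2_def by (intro bop_smult bop_minus_op Tb Ts(1))
    show "cinner (S2 x) y = cinner x (S2 y)" for x y
      by (simp add: S2_def cinner_scaleC_left cinner_scaleC_right cinner_diff_left cinner_diff_right Ts(2) Ts2
          algebra_simps)
    show "S2 (\<pi> a x) = \<pi> a (S2 x)" for a x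
      by (simp add: S2_def Tpi Tspi bop_diff[OF pib] bop_scale[OF pib])
    show "S2 (E A x) = E A (S2 x)" if "A \<in> sets M" for A x
      by (simp add: S2_def TE[OF that] TsE[OF that] bop_diff[OF Eb[OF that]] bop_scale[OF Eb[OF that]])
  qed
  then obtain c2 where c2: "\<And>x. S2 x = c2 *\<^sub>C x" by blast
  have "T x = (c1 + \<i> * c2) *\<^sub>C x" for x
  proof -
    have "S1 x + \<i> *\<^sub>C S2 x = (1/2::complex) *\<^sub>C (T x + Ts x) + (1/2::complex) *\<^sub>C (T x - Ts x)"
      by (simp add: S1_def S2_def scaleC_scaleC)
    also have "\<dots> = (1/2::complex) *\<^sub>C ((T x + Ts x) + (T x - Ts x))" by (simp only: scaleC_add_right)
    also have "(T x + Ts x) + (T x - Ts x) = T x + T x" by simp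
    also have "(1/2::complex) *\<^sub>C (T x + T x) = T x" by (rule scaleC_one_half)
    finally have "T x = S1 x + \<i> *\<^sub>C S2 x" by simp
    then show ?thesis by (simp add: c1 c2 scaleC_scaleC scaleC_add_left)
  qed
  then have "T = (\<lambda>x. (c1 + \<i> * c2) *\<^sub>C x)" by (rule ext)
  then show ?thesis by blast
qed

lemma pure_imp_irred:
  assumes "pure_instrument M I"
  shows "irreducible_spectral_instrument M \<pi> E"
  unfolding irreducible_spectral_instrument_def
  using comm_scalar[OF assms] scalar_in_comm by blast

end




lemma sum_list_map_idx: "sum_list (map f xs) = (\<Sum>i<length xs. f (xs ! i))"
  by (simp add: sum_list_sum_nth atLeast0LessThan)

lemma cinner_sum_list_left: "cinner (sum_list (map f xs)) y = sum_list (map (\<lambda>p. cinner (f p) (y::'a::complex_inner)) xs)"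
  by (induction xs) (auto simp: cinner_add_left)
lemma cinner_sum_list_right: "cinner y (sum_list (map f xs)) = sum_list (map (\<lambda>p. cinner (y::'a::complex_inner) (f p)) xs)"
  by (induction xs) (auto simp: cinner_add_right)


lemma amgm_bound:
  fixes X a b :: real
  assumes a: "a \<ge> 0" and b: "b \<ge> 0" and H: "\<And>t. t > 0 \<Longrightarrow> X \<le> (t * a + b / t)\<^sup>2"
  shows "X \<le> 4 * a * b"
proof (rule field_le_epsilon)
  fix e :: real assume e: "e > 0"
  define \<epsilon> where "\<epsilon> = min 1 (e / (4 * (a + b + 1)))"
  have \<epsilon>: "\<epsilon> > 0" "\<epsilon> \<le> 1" "\<epsilon> \<le> e / (4 * (a + b + 1))" using e a b by (auto simp: \<epsilon>_def)
  define u where "u = sqrt (a + \<epsilon>)"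
  define v where "v = sqrt (b + \<epsilon>)"
  have u: "u > 0" "u\<^sup>2 = a + \<epsilon>" using a \<epsilon> by (auto simp: u_def)
  have v: "v > 0" "v\<^sup>2 = b + \<epsilon>" using b \<epsilon> by (auto simp: v_def)
  define t where "t = v / u"
  have t: "t > 0" using u v by (simp add: t_def)
  have "t * a \<le> t * u\<^sup>2" using t u \<epsilon> by (intro mult_left_mono) auto
  also have "t * u\<^sup>2 = u * v" using u(1) by (simp add: t_def power2_eq_square)
  finally have 1: "t * a \<le> u * v" .
  have "b / t \<le> v\<^sup>2 / t" using t v \<epsilon> by (intro divide_right_mono) auto
  also have "v\<^sup>2 / t = u * v" using u v by (simp add: t_def power2_eq_square field_simps)
  finally have 2: "b / t \<le> u * v" .
  have "X \<le> (t * a + b / t)\<^sup>2" by (rule H[OF t])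
  also have "\<dots> \<le> (2 * (u * v))\<^sup>2"
    using 1 2 t a b by (intro power_mono) auto
  also have "\<dots> = 4 * (a + \<epsilon>) * (b + \<epsilon>)" using u v by (simp add: power_mult_distrib)
  also have "\<dots> = 4 * a * b + 4 * \<epsilon> * (a + b + \<epsilon>)" by (simp add: algebra_simps)
  also have "4 * \<epsilon> * (a + b + \<epsilon>) \<le> 4 * \<epsilon> * (a + b + 1)" using \<epsilon> by (intro mult_left_mono) auto
  also have "\<dots> \<le> e" using \<epsilon>(3) a b by (simp add: field_simps)
  finally show "X \<le> 4 * a * b + e" by simp
qed


lemma star_one: "star (1::'b::cstar_algebra) = 1"
proof -
  have "star (star 1 * (1::'b)) = star 1 * star (star 1)" by (rule star_mult)
  then show ?thesis by (simp add: star_star)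
qed

context bidil
begin

definition vecL :: "('a \<times> 'x set \<times> 'h) list \<Rightarrow> 'k" where
  "vecL r = sum_list (map (\<lambda>p. \<pi> (fst p) (E (fst (snd p)) (V (snd (snd p))))) r)"
definition goodL :: "('a \<times> 'x set \<times> 'h) list \<Rightarrow> bool" where
  "goodL r \<longleftrightarrow> (\<forall>p\<in>set r. fst (snd p) \<in> sets M)"
definition gramL :: "('x set \<Rightarrow> 'a \<Rightarrow> 'h \<Rightarrow> 'h) \<Rightarrow> ('a \<times> 'x set \<times> 'h) list \<Rightarrow> ('a \<times> 'x set \<times> 'h) list \<Rightarrow> complex" where
  "gramL \<Phi> r s = sum_list (map (\<lambda>p. sum_list (map (\<lambda>q.
      cinner (snd (snd p)) (\<Phi> (fst (snd p) \<inter> fst (snd q)) (star (fst p) * fst q) (snd (snd q)))) s)) r)"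
definition scaleL :: "complex \<Rightarrow> ('a \<times> 'x set \<times> 'h) list \<Rightarrow> ('a \<times> 'x set \<times> 'h) list" where
  "scaleL c r = map (\<lambda>p. (fst p, fst (snd p), c *\<^sub>C snd (snd p))) r"

lemma vec_nil: "vecL [] = 0" by (simp add: vecL_def)
lemma vec_append: "vecL (r @ s) = vecL r + vecL s" by (simp add: vecL_def)
lemma vec_single: "vecL [(a, A, h)] = \<pi> a (E A (V h))" by (simp add: vecL_def)
lemma good_append: "goodL (r @ s) \<longleftrightarrow> goodL r \<and> goodL s" by (auto simp: goodL_def)
lemma good_scale: "goodL (scaleL c r) \<longleftrightarrow> goodL r" by (auto simp: goodL_def scaleL_def)
lemma good_single: "goodL [(a, A, h)] \<longleftrightarrow> A \<in> sets M" by (simp add: goodL_def)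
lemma good_nil: "goodL []" by (simp add: goodL_def)

lemma vec_scale: "goodL r \<Longrightarrow> vecL (scaleL c r) = c *\<^sub>C vecL r"
proof (induction r)
  case Nil then show ?case by (simp add: vecL_def scaleL_def)
next
  case (Cons p r)
  have A: "fst (snd p) \<in> sets M" using Cons.prems by (simp add: goodL_def)
  have r: "goodL r" using Cons.prems by (simp add: goodL_def)
  have "vecL (scaleL c (p # r)) = \<pi> (fst p) (E (fst (snd p)) (V (c *\<^sub>C snd (snd p)))) + vecL (scaleL c r)"
    by (simp add: vecL_def scaleL_def)
  also have "\<dots> = c *\<^sub>C \<pi> (fst p) (E (fst (snd p)) (V (snd (snd p)))) + c *\<^sub>C vecL r"
    by (simp add: Cons.IH[OF r] bop_scale[OF Vb] bop_scale[OF Eb[OF A]] bop_scale[OF pib])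
  also have "\<dots> = c *\<^sub>C vecL (p # r)" by (simp add: vecL_def scaleC_add_right)
  finally show ?case .
qed

lemma gram_append_l: "gramL \<Phi> (r @ r') s = gramL \<Phi> r s + gramL \<Phi> r' s"
  by (simp add: gramL_def)
lemma gram_append_r: "gramL \<Phi> r (s @ s') = gramL \<Phi> r s + gramL \<Phi> r s'"
  by (simp add: gramL_def sum_list_addf)
lemma gram_scale_l: "gramL \<Phi> (scaleL c r) s = cnj c * gramL \<Phi> r s"
  by (simp add: gramL_def scaleL_def cinner_scaleC_left sum_list_const_mult o_def)
lemma gram_scale_r:
  assumes b: "\<And>A a. A \<in> sets M \<Longrightarrow> bounded_clinear_op (\<Phi> A a)" and r: "goodL r" and s: "goodL s"
  shows "gramL \<Phi> r (scaleL c s) = c * gramL \<Phi> r s"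
proof -
  define f where "f = (\<lambda>p q. cinner (snd (snd p)) (\<Phi> (fst (snd p) \<inter> fst (snd q)) (star (fst p) * fst q) (snd (snd q))))"
  have fs: "f p (fst q, fst (snd q), c *\<^sub>C snd (snd q)) = c * f p q" if "p \<in> set r" "q \<in> set s" for p q
  proof -
    have "fst (snd p) \<inter> fst (snd q) \<in> sets M" using that r s by (auto simp: goodL_def)
    then show ?thesis by (simp add: f_def bop_scale[OF b] cinner_scaleC_right)
  qed
  have g: "gramL \<Phi> r s' = sum_list (map (\<lambda>p. sum_list (map (f p) s')) r)" for s'
    by (simp add: gramL_def f_def)
  have eq: "map (\<lambda>p. sum_list (map (f p) (scaleL c s))) r = map (\<lambda>p. c * sum_list (map (f p) s)) r"
  proof (rule map_cong[OF refl])
    fix p assume p: "p \<in> set r"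
    have "map (f p) (scaleL c s) = map (\<lambda>q. c * f p q) s"
      unfolding scaleL_def map_map o_def by (rule map_cong[OF refl]) (rule fs[OF p])
    then show "sum_list (map (f p) (scaleL c s)) = c * sum_list (map (f p) s)"
      by (simp add: sum_list_const_mult)
  qed
  have "gramL \<Phi> r (scaleL c s) = sum_list (map (\<lambda>p. sum_list (map (f p) (scaleL c s))) r)" by (rule g)
  also have "\<dots> = sum_list (map (\<lambda>p. c * sum_list (map (f p) s)) r)" using eq by (rule arg_cong)
  also have "\<dots> = c * gramL \<Phi> r s" by (simp add: g sum_list_const_mult)
  finally show ?thesis .
qed
lemma gram_single: "gramL \<Phi> [(a, A, h)] [(b, B, k)] = cinner h (\<Phi> (A \<inter> B) (star a * b) k)"
  by (simp add: gramL_def)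

lemma gram_diff: "gramL (\<lambda>A a x. \<Phi> A a x - \<Psi> A a x) r s = gramL \<Phi> r s - gramL \<Psi> r s"
  by (simp add: gramL_def cinner_diff_right sum_list_subtractf)

lemma inner_gen:
  assumes "A \<in> sets M" "B \<in> sets M"
  shows "cinner (\<pi> a (E A (V h))) (\<pi> b (E B (V k))) = cinner h (I (A \<inter> B) (star a * b) k)"
proof -
  have "cinner (\<pi> a (E A (V h))) (\<pi> b (E B (V k))) = cinner (V h) (E A (\<pi> (star a) (\<pi> b (E B (V k)))))"
    by (simp add: pi_adj2 E_adj assms)
  also have "\<dots> = cinner (V h) (\<pi> (star a * b) (E (A \<inter> B) (V k)))"
    by (simp add: pi_mult comm0[symmetric] E_mult assms)
  also have "\<dots> = cinner h (I (A \<inter> B) (star a * b) k)" using assms by (simp add: Irep)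
  finally show ?thesis .
qed

lemma gram_I:
  assumes "goodL r" "goodL s"
  shows "gramL I r s = cinner (vecL r) (vecL s)"
proof -
  have l: "cinner (vecL r) y = sum_list (map (\<lambda>p. cinner (\<pi> (fst p) (E (fst (snd p)) (V (snd (snd p))))) y) r)" for y
    by (simp add: vecL_def cinner_sum_list_left)
  have rr: "cinner x (vecL s) = sum_list (map (\<lambda>q. cinner x (\<pi> (fst q) (E (fst (snd q)) (V (snd (snd q)))))) s)" for x
    by (simp add: vecL_def cinner_sum_list_right)
  have "cinner (vecL r) (vecL s) = sum_list (map (\<lambda>p. cinner (\<pi> (fst p) (E (fst (snd p)) (V (snd (snd p))))) (vecL s)) r)"
    by (rule l)
  also have "\<dots> = sum_list (map (\<lambda>p. sum_list (map (\<lambda>q.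
      cinner (\<pi> (fst p) (E (fst (snd p)) (V (snd (snd p))))) (\<pi> (fst q) (E (fst (snd q)) (V (snd (snd q)))))) s)) r)"
    by (simp only: rr)
  also have "\<dots> = gramL I r s"
    unfolding gramL_def
  proof (intro arg_cong[where f=sum_list] map_cong[OF refl])
    fix p q assume p: "p \<in> set r" and q: "q \<in> set s"
    have "fst (snd p) \<in> sets M" "fst (snd q) \<in> sets M" using p q assms by (auto simp: goodL_def)
    then show "cinner (\<pi> (fst p) (E (fst (snd p)) (V (snd (snd p))))) (\<pi> (fst q) (E (fst (snd q)) (V (snd (snd q))))) =
      cinner (snd (snd p)) (I (fst (snd p) \<inter> fst (snd q)) (star (fst p) * fst q) (snd (snd q)))"
      by (rule inner_gen)
  qed
  finally show ?thesis by simp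
qed


lemma gram_pos:
  assumes cp: "cp_instrument M \<Phi>" and r: "goodL r"
  shows "Im (gramL \<Phi> r r) = 0 \<and> 0 \<le> Re (gramL \<Phi> r r)"
proof -
  define n where "n = length r"
  define a where "a i = fst (r ! i)" for i
  define A where "A i = fst (snd (r ! i))" for i
  define h where "h i = snd (snd (r ! i))" for i
  have Am: "A i \<in> sets M" if "i < n" for i
    using r that nth_mem[of i r] by (auto simp: goodL_def A_def n_def)
  have cpm: "cp_map (\<Phi> B)" if "B \<in> sets M" for B using cp that by (simp add: cp_instrument_def)
  have \<Phi>b: "bounded_clinear_op (\<Phi> B c)" if "B \<in> sets M" for B c using cpm[OF that] by (simp add: cp_map_def)
  have ca: "(\<lambda>m. cinner x (\<Phi> (F m) c y)) sums cinner x (\<Phi> (\<Union>m. F m) c y)"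
    if "range F \<subseteq> sets M" "disjoint_family F" for x y c and F :: "nat \<Rightarrow> 'x set"
    using cp that unfolding cp_instrument_def by blast
  have g: "gramL \<Phi> r r = (\<Sum>i<n. \<Sum>j<n. cinner (h i) (\<Phi> (A i \<inter> A j) (star (a i) * a j) (h j)))"
    by (simp add: gramL_def sum_list_map_idx n_def a_def A_def h_def)
  define P where "P \<sigma> = {x \<in> space M. \<forall>i<n. (x \<in> A i \<longleftrightarrow> i \<in> \<sigma>)}" for \<sigma>
  define S where "S = Pow {..<n}"
  have finS: "finite S" by (simp add: S_def)
  have Pm: "P \<sigma> \<in> sets M" for \<sigma>
  proof (cases "n = 0")
    case True then have "P \<sigma> = space M" by (auto simp: P_def)
    then show ?thesis by simp
  next
    case False
    have "P \<sigma> = space M \<inter> (\<Inter>i\<in>{..<n}. if i \<in> \<sigma> then A i else space M - A i)"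
      unfolding P_def by (auto split: if_splits)
    moreover have "(\<Inter>i\<in>{..<n}. if i \<in> \<sigma> then A i else space M - A i) \<in> sets M"
      using False Am by (intro sets.finite_INT) auto
    ultimately show ?thesis by auto
  qed
  have dj: "disjoint_family_on P S"
    unfolding disjoint_family_on_def
  proof (intro ballI impI)
    fix \<sigma> \<tau> assume st: "\<sigma> \<in> S" "\<tau> \<in> S" "\<sigma> \<noteq> \<tau>"
    show "P \<sigma> \<inter> P \<tau> = {}"
    proof (rule ccontr)
      assume "P \<sigma> \<inter> P \<tau> \<noteq> {}"
      then obtain x where "x \<in> P \<sigma>" "x \<in> P \<tau>" by blast
      then have "\<forall>i<n. (i \<in> \<sigma> \<longleftrightarrow> i \<in> \<tau>)" by (auto simp: P_def)
      then have "\<sigma> = \<tau>" using st(1,2) by (auto simp: S_def)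
      then show False using st(3) by simp
    qed
  qed
  have cover: "A i \<inter> A j = (\<Union>\<sigma>\<in>{\<sigma>\<in>S. i \<in> \<sigma> \<and> j \<in> \<sigma>}. P \<sigma>)" if ij: "i < n" "j < n" for i j
  proof
    show "A i \<inter> A j \<subseteq> (\<Union>\<sigma>\<in>{\<sigma>\<in>S. i \<in> \<sigma> \<and> j \<in> \<sigma>}. P \<sigma>)"
    proof
      fix x assume x: "x \<in> A i \<inter> A j"
      then have xs: "x \<in> space M" using sets.sets_into_space[OF Am[OF ij(1)]] by auto
      define \<sigma> where "\<sigma> = {l. l < n \<and> x \<in> A l}"
      have "\<sigma> \<in> {\<sigma>\<in>S. i \<in> \<sigma> \<and> j \<in> \<sigma>}" using x ij by (auto simp: \<sigma>_def S_def)
      moreover have "x \<in> P \<sigma>" using xs by (auto simp: P_def \<sigma>_def)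
      ultimately show "x \<in> (\<Union>\<sigma>\<in>{\<sigma>\<in>S. i \<in> \<sigma> \<and> j \<in> \<sigma>}. P \<sigma>)" by blast
    qed
    show "(\<Union>\<sigma>\<in>{\<sigma>\<in>S. i \<in> \<sigma> \<and> j \<in> \<sigma>}. P \<sigma>) \<subseteq> A i \<inter> A j" using ij by (auto simp: P_def)
  qed
  have spl: "\<Phi> (A i \<inter> A j) c y = (\<Sum>\<sigma>\<in>{\<sigma>\<in>S. i \<in> \<sigma> \<and> j \<in> \<sigma>}. \<Phi> (P \<sigma>) c y)"
    if ij: "i < n" "j < n" for i j c y
  proof -
    have "\<Phi> (\<Union>\<sigma>\<in>{\<sigma>\<in>S. i \<in> \<sigma> \<and> j \<in> \<sigma>}. P \<sigma>) c y = (\<Sum>\<sigma>\<in>{\<sigma>\<in>S. i \<in> \<sigma> \<and> j \<in> \<sigma>}. \<Phi> (P \<sigma>) c y)"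
    proof (rule ca_finite[of M "\<lambda>B. \<Phi> B c"])
      show "(\<lambda>m. cinner x (\<Phi> (F m) c y)) sums cinner x (\<Phi> (\<Union>m. F m) c y)"
        if "range F \<subseteq> sets M" "disjoint_family F" for x y and F :: "nat \<Rightarrow> 'x set"
        by (rule ca[OF that])
      show "finite {\<sigma>\<in>S. i \<in> \<sigma> \<and> j \<in> \<sigma>}" using finS by simp
      show "P \<sigma> \<in> sets M" for \<sigma> by (rule Pm)
      show "disjoint_family_on P {\<sigma>\<in>S. i \<in> \<sigma> \<and> j \<in> \<sigma>}"
        by (rule disjoint_family_on_mono[OF _ dj]) auto
    qed
    then show ?thesis using cover[OF ij] by simp
  qed
  define hs where "hs \<sigma> i = (if i \<in> \<sigma> then h i else 0)" for \<sigma> i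
  have trm: "cinner (h i) (\<Phi> (A i \<inter> A j) c (h j)) = (\<Sum>\<sigma>\<in>S. cinner (hs \<sigma> i) (\<Phi> (P \<sigma>) c (hs \<sigma> j)))"
    if ij: "i < n" "j < n" for i j c
  proof -
    have "cinner (h i) (\<Phi> (A i \<inter> A j) c (h j)) = (\<Sum>\<sigma>\<in>{\<sigma>\<in>S. i \<in> \<sigma> \<and> j \<in> \<sigma>}. cinner (h i) (\<Phi> (P \<sigma>) c (h j)))"
      by (simp add: spl[OF ij] cinner_sum_right)
    also have "\<dots> = (\<Sum>\<sigma>\<in>S. if i \<in> \<sigma> \<and> j \<in> \<sigma> then cinner (h i) (\<Phi> (P \<sigma>) c (h j)) else 0)"
      by (rule sum.inter_filter[OF finS])
    also have "\<dots> = (\<Sum>\<sigma>\<in>S. cinner (hs \<sigma> i) (\<Phi> (P \<sigma>) c (hs \<sigma> j)))"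
      by (rule sum.cong) (auto simp: hs_def bop_zero[OF \<Phi>b[OF Pm]])
    finally show ?thesis .
  qed
  define z where "z \<sigma> = (\<Sum>i<n. \<Sum>j<n. cinner (hs \<sigma> i) (\<Phi> (P \<sigma>) (star (a i) * a j) (hs \<sigma> j)))" for \<sigma>
  have "gramL \<Phi> r r = (\<Sum>i<n. \<Sum>j<n. \<Sum>\<sigma>\<in>S. cinner (hs \<sigma> i) (\<Phi> (P \<sigma>) (star (a i) * a j) (hs \<sigma> j)))"
    unfolding g by (intro sum.cong refl) (simp add: trm)
  also have "\<dots> = (\<Sum>i<n. \<Sum>\<sigma>\<in>S. \<Sum>j<n. cinner (hs \<sigma> i) (\<Phi> (P \<sigma>) (star (a i) * a j) (hs \<sigma> j)))"
    by (intro sum.cong refl sum.swap)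
  also have "\<dots> = (\<Sum>\<sigma>\<in>S. z \<sigma>)" unfolding z_def by (rule sum.swap)
  finally have gz: "gramL \<Phi> r r = (\<Sum>\<sigma>\<in>S. z \<sigma>)" .
  have each: "Im (z \<sigma>) = 0 \<and> 0 \<le> Re (z \<sigma>)" for \<sigma>
    using cpm[OF Pm[of \<sigma>]] unfolding cp_map_def z_def by blast
  show ?thesis unfolding gz using each by (simp add: sum_nonneg)
qed



definition Dset where "Dset = {vecL r | r. goodL r}"

lemma gen_vec: "\<pi> a (E A (V h)) = vecL [(a, A, h)]" by (simp add: vec_single)

lemma vec_in: "goodL r \<Longrightarrow> vecL r \<in> Dset" by (auto simp: Dset_def)

lemma cspan_sub: "cspan Gen \<subseteq> Dset"
proof
  fix y assume "y \<in> cspan Gen"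
  then have "\<exists>(n::nat) c s. (\<forall>i<n. s i \<in> Gen) \<and> y = (\<Sum>i<n. c i *\<^sub>C s i)" by (simp add: cspan_def)
  then obtain n c s where s: "\<forall>i<(n::nat). s i \<in> Gen" and y: "y = (\<Sum>i<n. c i *\<^sub>C s i)" by blast
  have "\<forall>i\<in>{..<n}. \<exists>p. fst (snd p) \<in> sets M \<and> s i = \<pi> (fst p) (E (fst (snd p)) (V (snd (snd p))))"
    using s unfolding Gen_def by fastforce
  then obtain f where f: "\<forall>i\<in>{..<n}. fst (snd (f i)) \<in> sets M \<and> s i = \<pi> (fst (f i)) (E (fst (snd (f i))) (V (snd (snd (f i)))))"
    by (metis bchoice)
  define r where "r = map (\<lambda>i. (fst (f i), fst (snd (f i)), c i *\<^sub>C snd (snd (f i)))) [0..<n]"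
  have gr: "goodL r" using f by (auto simp: r_def goodL_def)
  have "vecL r = sum_list (map (\<lambda>i. \<pi> (fst (f i)) (E (fst (snd (f i))) (V (c i *\<^sub>C snd (snd (f i)))))) [0..<n])"
    by (simp add: vecL_def r_def o_def)
  also have "\<dots> = (\<Sum>i<n. \<pi> (fst (f i)) (E (fst (snd (f i))) (V (c i *\<^sub>C snd (snd (f i))))))"
    by (simp add: sum_set_upt_conv_sum_list_nat[symmetric] atLeast0LessThan)
  also have "\<dots> = (\<Sum>i<n. c i *\<^sub>C s i)"
  proof (rule sum.cong[OF refl])
    fix i assume "i \<in> {..<n}"
    then have "fst (snd (f i)) \<in> sets M" "s i = \<pi> (fst (f i)) (E (fst (snd (f i))) (V (snd (snd (f i)))))"
      using f by auto
    then show "\<pi> (fst (f i)) (E (fst (snd (f i))) (V (c i *\<^sub>C snd (snd (f i))))) = c i *\<^sub>C s i"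
      by (simp add: bop_scale[OF Vb] bop_scale[OF Eb] bop_scale[OF pib])
  qed
  finally have "vecL r = y" using y by simp
  then show "y \<in> Dset" using gr unfolding Dset_def by blast
qed

lemma Gen_sub: "Gen \<subseteq> Dset"
proof
  fix g assume "g \<in> Gen"
  then obtain a A h where "g = \<pi> a (E A (V h))" "A \<in> sets M" unfolding Gen_def by blast
  then show "g \<in> Dset" using vec_in[of "[(a, A, h)]"] by (simp add: gen_vec good_single)
qed

lemma dsub_D: "dsub Dset"
  unfolding dsub_def
proof (intro conjI ballI allI impI)
  show "0 \<in> Dset" using vec_in[OF good_nil] by (simp add: vec_nil)
  show "x + y \<in> Dset" if "x \<in> Dset" "y \<in> Dset" for x y
    using that by (auto simp: Dset_def good_append simp flip: vec_append)
  show "c *\<^sub>C x \<in> Dset" if H: "x \<in> Dset" for c x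
  proof -
    obtain r where "goodL r" "x = vecL r" using H by (auto simp: Dset_def)
    then show ?thesis using vec_in[of "scaleL c r"] by (simp add: vec_scale good_scale)
  qed
  show "\<exists>y\<in>Dset. cnorm (x - y) < e" if "0 < e" for x e
    using dense that cspan_sub unfolding norm_dense_def Gen_def by blast
qed

context
  fixes J :: "'x set \<Rightarrow> 'a \<Rightarrow> 'h \<Rightarrow> 'h"
  assumes domJ: "dominated_instrument M J I"
begin

lemma cpJ: "cp_instrument M J" using domJ by (simp add: dominated_instrument_def)
lemma cpIJ: "cp_instrument M (\<lambda>A a x. I A a x - J A a x)" using domJ by (simp add: dominated_instrument_def)
lemma Jb: "A \<in> sets M \<Longrightarrow> bounded_clinear_op (J A a)"
  using cpJ by (simp add: cp_instrument_def cp_map_def)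

lemma gJ_pos: "goodL r \<Longrightarrow> Im (gramL J r r) = 0 \<and> 0 \<le> Re (gramL J r r)"
  by (rule gram_pos[OF cpJ])

lemma gJ_le: "goodL r \<Longrightarrow> Re (gramL J r r) \<le> (cnorm (vecL r))\<^sup>2"
proof -
  assume r: "goodL r"
  have "0 \<le> Re (gramL (\<lambda>A a x. I A a x - J A a x) r r)" using gram_pos[OF cpIJ r] by blast
  then show ?thesis by (simp add: gram_diff gram_I[OF r r] cnorm_sq)
qed

lemma gJ_cmod: "goodL r \<Longrightarrow> cmod (gramL J r r) \<le> (cnorm (vecL r))\<^sup>2"
proof -
  assume r: "goodL r"
  have "cmod (gramL J r r) = \<bar>Re (gramL J r r)\<bar>" using gJ_pos[OF r] by (simp add: cmod_eq_Re)
  then show ?thesis using gJ_pos[OF r] gJ_le[OF r] by simp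
qed

lemma Q_expand:
  assumes r: "goodL r" and s: "goodL s"
  shows "gramL J (r @ scaleL l s) (r @ scaleL l s) =
    gramL J r r + l * gramL J r s + cnj l * gramL J s r + cnj l * l * gramL J s s"
  using r s by (simp add: gram_append_l gram_append_r gram_scale_l gram_scale_r[OF Jb] good_scale)

lemma Q_bound:
  assumes r: "goodL r" and s: "goodL s" and l: "cmod l = 1"
  shows "cmod (gramL J (r @ scaleL l s) (r @ scaleL l s)) \<le> (cnorm (vecL r) + cnorm (vecL s))\<^sup>2"
proof -
  have d: "goodL (r @ scaleL l s)" using r s by (simp add: good_append good_scale)
  have "cmod (gramL J (r @ scaleL l s) (r @ scaleL l s)) \<le> (cnorm (vecL (r @ scaleL l s)))\<^sup>2"
    by (rule gJ_cmod[OF d])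
  also have "cnorm (vecL (r @ scaleL l s)) = cnorm (vecL r + l *\<^sub>C vecL s)"
    by (simp add: vec_append vec_scale[OF s])
  also have "\<dots> \<le> cnorm (vecL r) + cnorm (vecL s)"
    using cnorm_triangle[of "vecL r" "l *\<^sub>C vecL s"] by (simp add: cnorm_scaleC l)
  then have "(cnorm (vecL r + l *\<^sub>C vecL s))\<^sup>2 \<le> (cnorm (vecL r) + cnorm (vecL s))\<^sup>2"
    by (intro power_mono) auto
  finally show ?thesis .
qed

lemma polar:
  assumes r: "goodL r" and s: "goodL s"
  shows "cmod (gramL J r s) \<le> (cnorm (vecL r) + cnorm (vecL s))\<^sup>2"
proof -
  define Q where "Q l = gramL J (r @ scaleL l s) (r @ scaleL l s)" for l
  define B where "B = (cnorm (vecL r) + cnorm (vecL s))\<^sup>2"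
  have QB: "cmod (Q l) \<le> B" if "cmod l = 1" for l unfolding Q_def B_def by (rule Q_bound[OF r s that])
  have Qe: "Q l = gramL J r r + l * gramL J r s + cnj l * gramL J s r + cnj l * l * gramL J s s" for l
    unfolding Q_def by (rule Q_expand[OF r s])
  have Q1: "Q 1 = gramL J r r + gramL J r s + gramL J s r + gramL J s s" by (simp add: Qe)
  have Qm1: "Q (-1) = gramL J r r - gramL J r s - gramL J s r + gramL J s s" by (simp add: Qe)
  have Qi: "Q \<i> = gramL J r r + \<i> * gramL J r s - \<i> * gramL J s r + gramL J s s" by (simp add: Qe)
  have Qmi: "Q (- \<i>) = gramL J r r - \<i> * gramL J r s + \<i> * gramL J s r + gramL J s s" by (simp add: Qe)
  have "4 * gramL J r s = Q 1 - Q (-1) - \<i> * Q \<i> + \<i> * Q (- \<i>)"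
    using Q1 Qm1 Qi Qmi i_squared by algebra
  have tri: "cmod (x - y - \<i>*z + \<i>*w) \<le> cmod x + cmod y + cmod z + cmod w" for x y z w :: complex
  proof -
    have "cmod (x - y - \<i>*z + \<i>*w) \<le> cmod (x - y - \<i>*z) + cmod (\<i>*w)" by (rule norm_triangle_ineq)
    moreover have "cmod (x - y - \<i>*z) \<le> cmod (x - y) + cmod (\<i>*z)" by (rule norm_triangle_ineq4)
    moreover have "cmod (x - y) \<le> cmod x + cmod y" by (rule norm_triangle_ineq4)
    ultimately show ?thesis by (simp add: norm_mult)
  qed
  from \<open>4 * gramL J r s = _\<close> have "4 * cmod (gramL J r s) = cmod (Q 1 - Q (-1) - \<i> * Q \<i> + \<i> * Q (- \<i>))"
    by (metis norm_mult norm_numeral)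
  also have "\<dots> \<le> cmod (Q 1) + cmod (Q (-1)) + cmod (Q \<i>) + cmod (Q (- \<i>))"
    by (rule tri)
  also have "\<dots> \<le> B + B + B + B" using QB[of 1] QB[of "-1"] QB[of \<i>] QB[of "-\<i>"] by simp
  finally show ?thesis unfolding B_def by simp
qed

lemma bound4:
  assumes r: "goodL r" and s: "goodL s"
  shows "cmod (gramL J r s) \<le> 4 * cnorm (vecL r) * cnorm (vecL s)"
proof (rule amgm_bound)
  fix t :: real assume t: "t > 0"
  have rt: "goodL (scaleL (complex_of_real t) r)" and st: "goodL (scaleL (complex_of_real (1/t)) s)"
    using r s by (simp_all add: good_scale)
  have "gramL J (scaleL (complex_of_real t) r) (scaleL (complex_of_real (1/t)) s) = gramL J r s"
    using t by (simp add: gram_scale_l gram_scale_r[OF Jb r s])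
  moreover have "cmod (gramL J (scaleL (complex_of_real t) r) (scaleL (complex_of_real (1/t)) s))
      \<le> (cnorm (vecL (scaleL (complex_of_real t) r)) + cnorm (vecL (scaleL (complex_of_real (1/t)) s)))\<^sup>2"
    by (rule polar[OF rt st])
  moreover have "cnorm (vecL (scaleL (complex_of_real t) r)) = t * cnorm (vecL r)"
    using t by (simp add: vec_scale[OF r] cnorm_scaleC)
  moreover have "cnorm (vecL (scaleL (complex_of_real (1/t)) s)) = cnorm (vecL s) / t"
    using t by (simp add: vec_scale[OF s] cnorm_scaleC norm_divide)
  ultimately show "cmod (gramL J r s) \<le> (t * cnorm (vecL r) + cnorm (vecL s) / t)\<^sup>2" by simp
qed auto

definition rep where "rep x = (SOME r. goodL r \<and> vecL r = x)"
definition beta where "beta x y = gramL J (rep x) (rep y)"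

lemma rep: "x \<in> Dset \<Longrightarrow> goodL (rep x) \<and> vecL (rep x) = x"
  unfolding rep_def Dset_def by (rule someI_ex) auto

lemma g_zero_l: "goodL d \<Longrightarrow> goodL s \<Longrightarrow> vecL d = 0 \<Longrightarrow> gramL J d s = 0"
  using bound4[of d s] by simp
lemma g_zero_r: "goodL r \<Longrightarrow> goodL d \<Longrightarrow> vecL d = 0 \<Longrightarrow> gramL J r d = 0"
  using bound4[of r d] by simp

lemma g_wd_l:
  assumes "goodL r" "goodL r'" "vecL r = vecL r'" "goodL s"
  shows "gramL J r s = gramL J r' s"
proof -
  have d: "goodL (r @ scaleL (-1) r')" using assms by (simp add: good_append good_scale)
  have "vecL (r @ scaleL (-1) r') = 0" using assms by (simp add: vec_append vec_scale scaleC_minus_left scaleC_one)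
  then have "gramL J (r @ scaleL (-1) r') s = 0" by (rule g_zero_l[OF d assms(4)])
  then show ?thesis by (simp add: gram_append_l gram_scale_l)
qed

lemma g_wd_r:
  assumes "goodL s" "goodL s'" "vecL s = vecL s'" "goodL r"
  shows "gramL J r s = gramL J r s'"
proof -
  have d: "goodL (s @ scaleL (-1) s')" using assms by (simp add: good_append good_scale)
  have "vecL (s @ scaleL (-1) s') = 0" using assms by (simp add: vec_append vec_scale scaleC_minus_left scaleC_one)
  then have "gramL J r (s @ scaleL (-1) s') = 0" by (rule g_zero_r[OF assms(4) d])
  then show ?thesis using assms by (simp add: gram_append_r gram_scale_r[OF Jb])
qed

lemma beta_vec:
  assumes r: "goodL r" and s: "goodL s"
  shows "beta (vecL r) (vecL s) = gramL J r s"
proof -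
  have r': "goodL (rep (vecL r))" "vecL (rep (vecL r)) = vecL r" using rep[OF vec_in[OF r]] by auto
  have s': "goodL (rep (vecL s))" "vecL (rep (vecL s)) = vecL s" using rep[OF vec_in[OF s]] by auto
  have "beta (vecL r) (vecL s) = gramL J (rep (vecL r)) (rep (vecL s))" by (simp add: beta_def)
  also have "\<dots> = gramL J r (rep (vecL s))" using r' r s' by (intro g_wd_l) auto
  also have "\<dots> = gramL J r s" using s' s r by (intro g_wd_r) auto
  finally show ?thesis .
qed

lemma bformJ: "bform Dset Dset beta 4"
proof (rule bform.intro)
  show "dsub Dset" by (rule dsub_D)
  show "dsub Dset" by (rule dsub_D)
  show "beta (x + x') y = beta x y + beta x' y" if H: "x \<in> Dset" "x' \<in> Dset" "y \<in> Dset" for x x' y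
  proof -
    obtain r r' s where "goodL r" "goodL r'" "goodL s" "x = vecL r" "x' = vecL r'" "y = vecL s"
      using H by (auto simp: Dset_def)
    then show ?thesis by (simp add: beta_vec good_append gram_append_l flip: vec_append)
  qed
  show "beta (c *\<^sub>C x) y = cnj c * beta x y" if H: "x \<in> Dset" "y \<in> Dset" for c x y
  proof -
    obtain r s where "goodL r" "goodL s" "x = vecL r" "y = vecL s"
      using H by (auto simp: Dset_def)
    then show ?thesis by (simp add: beta_vec good_scale gram_scale_l flip: vec_scale)
  qed
  show "beta x (y + y') = beta x y + beta x y'" if H: "x \<in> Dset" "y \<in> Dset" "y' \<in> Dset" for x y y'
  proof -
    obtain r s s' where "goodL r" "goodL s" "goodL s'" "x = vecL r" "y = vecL s" "y' = vecL s'"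
      using H by (auto simp: Dset_def)
    then show ?thesis by (simp add: beta_vec good_append gram_append_r flip: vec_append)
  qed
  show "beta x (c *\<^sub>C y) = c * beta x y" if H: "x \<in> Dset" "y \<in> Dset" for c x y
  proof -
    obtain r s where "goodL r" "goodL s" "x = vecL r" "y = vecL s"
      using H by (auto simp: Dset_def)
    then show ?thesis by (simp add: beta_vec good_scale gram_scale_r[OF Jb] flip: vec_scale)
  qed
  show "cmod (beta x y) \<le> 4 * cnorm x * cnorm y" if H: "x \<in> Dset" "y \<in> Dset" for x y
  proof -
    obtain r s where "goodL r" "goodL s" "x = vecL r" "y = vecL s"
      using H by (auto simp: Dset_def)
    then show ?thesis by (simp add: beta_vec bound4)
  qed
qed simp

lemma T_exists: "\<exists>T. bounded_clinear_op T \<and> (\<forall>x\<in>Dset. \<forall>y\<in>Dset. cinner x (T y) = beta x y)"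
  by (rule form_to_op[OF bformJ])

lemma irred_imp_J:
  assumes irr: "irreducible_spectral_instrument M \<pi> E"
  shows "\<exists>t::real. 0 \<le> t \<and> t \<le> 1 \<and> (\<forall>A\<in>sets M. \<forall>a. J A a = (\<lambda>x. complex_of_real t *\<^sub>C I A a x))"
proof -
  obtain T where Tb: "bounded_clinear_op T" and TD: "\<And>x y. x \<in> Dset \<Longrightarrow> y \<in> Dset \<Longrightarrow> cinner x (T y) = beta x y"
    using T_exists by blast
  have Tg: "cinner (\<pi> a (E A (V h))) (T (\<pi> c (E C (V k)))) = cinner h (J (A \<inter> C) (star a * c) k)"
    if "A \<in> sets M" "C \<in> sets M" for a A h c C k
  proof -
    have g: "goodL [(a, A, h)]" "goodL [(c, C, k)]" using that by (simp_all add: good_single)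
    show ?thesis using TD[OF vec_in[OF g(1)] vec_in[OF g(2)]]
      by (simp add: gen_vec beta_vec[OF g] gram_single)
  qed
  have Tcomm: "T (\<pi> b (E B y)) = \<pi> b (E B (T y))" if B: "B \<in> sets M" for b B y
  proof -
    define W where "W y = T (\<pi> b (E B y)) - \<pi> b (E B (T y))" for y
    have Wb: "bounded_clinear_op W" unfolding W_def
      by (intro bop_minus_op bop_comp[OF Tb] bop_comp[OF pib] bop_comp[OF Eb[OF B]] Tb bop_comp[OF Eb[OF B] Tb] bop_id)
    have Wg: "W g = 0" if g: "g \<in> Gen" for g
    proof (rule dense_zero)
      fix g1 assume "g1 \<in> Gen"
      then obtain a A h where g1: "g1 = \<pi> a (E A (V h))" "A \<in> sets M" unfolding Gen_def by blast
      obtain c C k where g2: "g = \<pi> c (E C (V k))" "C \<in> sets M" using g unfolding Gen_def by blast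
      have BC: "B \<inter> C \<in> sets M" "B \<inter> A \<in> sets M" using B g1 g2 by auto
      have e1: "\<pi> b (E B g) = \<pi> (b * c) (E (B \<inter> C) (V k))"
        by (simp add: g2 pi_mult comm0[OF B, symmetric] E_mult[OF B g2(2)])
      have e2: "E B (\<pi> (star b) g1) = \<pi> (star b * a) (E (B \<inter> A) (V h))"
        by (simp add: g1 pi_mult comm0[OF B, symmetric] E_mult[OF B g1(2)])
      have "cinner g1 (T (\<pi> b (E B g))) = cinner h (J (A \<inter> (B \<inter> C)) (star a * (b * c)) k)"
        unfolding e1 g1(1) by (rule Tg[OF g1(2) BC(1)])
      moreover have "cinner g1 (\<pi> b (E B (T g))) = cinner h (J ((B \<inter> A) \<inter> C) (star (star b * a) * c) k)"
      proof -
        have "cinner g1 (\<pi> b (E B (T g))) = cinner (E B (\<pi> (star b) g1)) (T g)"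
          by (simp add: pi_adj[symmetric] E_adj[OF B])
        also have "\<dots> = cinner h (J ((B \<inter> A) \<inter> C) (star (star b * a) * c) k)"
          unfolding e2 g2(1) by (rule Tg[OF BC(2) g2(2)])
        finally show ?thesis .
      qed
      moreover have "(B \<inter> A) \<inter> C = A \<inter> (B \<inter> C)" by blast
      moreover have "star (star b * a) * c = star a * (b * c)" by (simp add: star_mult star_star mult.assoc)
      ultimately show "cinner g1 (W g) = 0" by (simp add: W_def cinner_diff_right)
    qed
    have "W y = 0" by (rule bop_gen_zero[OF Wb Wg])
    then show ?thesis by (simp add: W_def)
  qed
  have "T \<in> commutant {\<pi> a \<circ> E A | a A. A \<in> sets M}"
    unfolding commutant_def
  proof (intro CollectI conjI ballI Tb)
    fix s assume "s \<in> {\<pi> a \<circ> E A | a A. A \<in> sets M}"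
    then obtain b B where s: "s = \<pi> b \<circ> E B" "B \<in> sets M" by blast
    show "T \<circ> s = s \<circ> T" by (rule ext) (simp add: s Tcomm)
  qed
  then obtain t where t: "T = (\<lambda>x. t *\<^sub>C x)" using irr unfolding irreducible_spectral_instrument_def by auto
  have JI: "J A a k = t *\<^sub>C I A a k" if A: "A \<in> sets M" for A a k
  proof (rule cinner_ext_right)
    fix h
    have sp: "space M \<in> sets M" by simp
    have "cinner h (J A a k) = cinner h (J (space M \<inter> A) (star 1 * a) k)"
      using sets.Int_space_eq1[OF A] by (simp add: star_one)
    also have "\<dots> = cinner (\<pi> 1 (E (space M) (V h))) (T (\<pi> a (E A (V k))))" by (rule Tg[OF sp A, symmetric])
    also have "\<dots> = t * cinner h (I A a k)" by (simp add: t pi_one E_space cinner_scaleC_right Irep[OF A])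
    finally show "cinner h (J A a k) = cinner h (t *\<^sub>C I A a k)" by (simp add: cinner_scaleC_right)
  qed
  show ?thesis
  proof (cases "\<exists>h. V h \<noteq> 0")
    case True
    then obtain h where h: "V h \<noteq> 0" by blast
    define N where "N = (cnorm (V h))\<^sup>2"
    have N: "N > 0" using h by (simp add: N_def)
    have gr: "goodL [(1, space M, h)]" by (simp add: good_single)
    have vr: "vecL [(1, space M, h)] = V h" by (simp add: vec_single pi_one E_space)
    have "gramL J [(1, space M, h)] [(1, space M, h)] = cinner h (J (space M) 1 h)"
      by (simp add: gram_single star_one)
    also have "\<dots> = t * cinner h (I (space M) 1 h)" by (simp add: JI cinner_scaleC_right)
    also have "\<dots> = t * complex_of_real N" by (simp add: Irep pi_one E_space N_def cinner_self_cnorm)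
    finally have gt: "gramL J [(1, space M, h)] [(1, space M, h)] = t * complex_of_real N" .
    have i0: "Im t * N = 0" using gJ_pos[OF gr] unfolding gt by simp
    have r0: "0 \<le> Re t * N" using gJ_pos[OF gr] unfolding gt by simp
    have r1: "Re t * N \<le> N" using gJ_le[OF gr] unfolding gt vr N_def by simp
    have "Im t = 0" using i0 N by simp
    then have te: "t = complex_of_real (Re t)" by (simp add: complex_eq_iff)
    have "0 \<le> Re t" "Re t \<le> 1" using r0 r1 N by (simp_all add: zero_le_mult_iff)
    moreover have "\<forall>A\<in>sets M. \<forall>a. J A a = (\<lambda>x. complex_of_real (Re t) *\<^sub>C I A a x)"
      using JI te by (auto intro!: ext)
    ultimately show ?thesis by blast
  next
    case False
    then have V0: "V h = 0" for h by blast
    have "I A a k = 0" if "A \<in> sets M" for A a k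
      by (rule cinner_ext_right) (simp add: Irep[OF that] V0)
    then have "\<forall>A\<in>sets M. \<forall>a. J A a = (\<lambda>x. complex_of_real 0 *\<^sub>C I A a x)"
      using JI by (auto intro!: ext)
    then show ?thesis by (intro exI[of _ 0]) simp
  qed
qed



end


lemma irred_imp_pure:
  assumes "irreducible_spectral_instrument M \<pi> E"
  shows "pure_instrument M I"
  unfolding pure_instrument_def
proof (intro allI impI)
  fix J assume "dominated_instrument M J I"
  then show "\<exists>t::real. 0 \<le> t \<and> t \<le> 1 \<and> (\<forall>A\<in>sets M. \<forall>a. J A a = (\<lambda>x. complex_of_real t *\<^sub>C I A a x))"
    using irred_imp_J[OF _ assms] by blast
qed

lemma main: "pure_instrument M I \<longleftrightarrow> irreducible_spectral_instrument M \<pi> E"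
  using pure_imp_irred irred_imp_pure by blast

end


theorem proposition2p19:
  fixes M :: "'x measure"
    and \<I> :: "'x set \<Rightarrow> 'a::cstar_algebra \<Rightarrow> 'h::chilbert_space \<Rightarrow> 'h"
    and \<pi> :: "'a \<Rightarrow> 'k::chilbert_space \<Rightarrow> 'k"
    and E :: "'x set \<Rightarrow> 'k \<Rightarrow> 'k"
    and V :: "'h \<Rightarrow> 'k"
  assumes "cp_instrument M \<I>"
    and "minimal_bidilation M \<I> \<pi> E V"
  shows "pure_instrument M \<I> \<longleftrightarrow> irreducible_spectral_instrument M \<pi> E"
proof -
  interpret bidil M \<I> \<pi> E V by unfold_locales (fact assms)+
  show ?thesis by (rule main)
qed

end
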